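(* For the name-generation monad $T$ on $[\mathsf{Inj},\mathsf{Set}]$, an object $X$ is sober if and only if it is a nominal set (i.e. the functor $X:\mathsf{Inj}\to\mathsf{Set}$ preserves pullbacks), and the associated sobrification monad $D$ is idempotent.
   Context: $\mathsf{Inj}$ is the category of finite sets and injections. $(TX)(a)=\operatorname{colim}_{b\in\mathsf{Inj}}X(a+b)$, with unit induced by $b=\emptyset$ and multiplication induced by $(a+b)+c\cong a+(b+c)$; a commutative monad on $[\mathsf{Inj},\mathsf{Set}]$. An object $X$ is sober for $T$ if $\eta_X:X\to TX$ is an equalizer of $\eta_{TX},T\eta_X:TX\to TTX$. $\theta_X:DX\to TX$ denotes the equalizer of $\eta_{TX},T\eta_X$; $D$ is a monad with $Dg$ the unique map with $\theta_Z\circ Dg=Tg\circ\theta_Y$, unit $e_X$ with $\theta_X\circ e_X=\eta_X$, and multiplication $m_X$ with $\theta_X\circ m_X=\mu_X\circ T\theta_X\circ\theta_{DX}$; idempotent means the multiplication is an isomorphism. *)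

theory Defs
  imports Main
begin

text \<open>The skeleton of Inj: the object n stands for the finite set {0..<n};
  a morphism n \<rightarrow> m is (represented by) a function f :: nat \<Rightarrow> nat that is
  injective on {..<n} and maps {..<n} into {..<m}; two representatives are
  the same morphism iff they agree on {..<n}.
  Coproduct a + b is the natural number a + b, with a embedded as {..<a}
  and b as {a..<a+b}; hence (a+b)+c = a+(b+c) on the nose.\<close>

definition injm :: "nat \<Rightarrow> nat \<Rightarrow> (nat \<Rightarrow> nat) \<Rightarrow> bool" where
  "injm n m f \<longleftrightarrow> inj_on f {..<n} \<and> f ` {..<n} \<subseteq> {..<m}"

text \<open>A functor Inj \<rightarrow> Set with values in subsets of a type 'a:
  object part and action (act n m f x = X(f)(x) for f : n \<rightarrow> m).\<close>
type_synonym 'a psh = "(nat \<Rightarrow> 'a set) \<times> (nat \<Rightarrow> nat \<Rightarrow> (nat \<Rightarrow> nat) \<Rightarrow> 'a \<Rightarrow> 'a)"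

definition is_inj_functor :: "'a psh \<Rightarrow> bool" where
  "is_inj_functor X \<longleftrightarrow>
     (\<forall>n m f x. injm n m f \<longrightarrow> x \<in> fst X n \<longrightarrow> snd X n m f x \<in> fst X m) \<and>
     (\<forall>n x. x \<in> fst X n \<longrightarrow> snd X n n id x = x) \<and>
     (\<forall>n m p f g x. injm n m f \<longrightarrow> injm m p g \<longrightarrow> x \<in> fst X n \<longrightarrow>
        snd X n p (g \<circ> f) x = snd X m p g (snd X n m f x)) \<and>
     (\<forall>n m f g x. injm n m f \<longrightarrow> (\<forall>k<n. f k = g k) \<longrightarrow> x \<in> fst X n \<longrightarrow>
        snd X n m f x = snd X n m g x)"

text \<open>id_a + f : a+b \<rightarrow> a+b'  and  f + id_b : a+b \<rightarrow> a'+b\<close>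
definition plus_r :: "nat \<Rightarrow> (nat \<Rightarrow> nat) \<Rightarrow> nat \<Rightarrow> nat" where
  "plus_r a f = (\<lambda>k. if k < a then k else a + f (k - a))"

definition plus_l :: "nat \<Rightarrow> nat \<Rightarrow> (nat \<Rightarrow> nat) \<Rightarrow> nat \<Rightarrow> nat" where
  "plus_l a a' f = (\<lambda>k. if k < a then f k else a' + (k - a))"

text \<open>Colimit over b \<in> Inj of X(a+b): pairs (b,x) with x \<in> X(a+b), modulo the
  equivalence relation generated by (b,x) ~ (b', X(id_a+f) x) for f : b \<rightarrow> b'.\<close>
definition Tstep :: "'a psh \<Rightarrow> nat \<Rightarrow> nat \<times> 'a \<Rightarrow> nat \<times> 'a \<Rightarrow> bool" where
  "Tstep X a p q \<longleftrightarrow> snd p \<in> fst X (a + fst p) \<and>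
     (\<exists>f. injm (fst p) (fst q) f \<and>
          snd q = snd X (a + fst p) (a + fst q) (plus_r a f) (snd p))"

definition Teq :: "'a psh \<Rightarrow> nat \<Rightarrow> nat \<times> 'a \<Rightarrow> nat \<times> 'a \<Rightarrow> bool" where
  "Teq X a = (\<lambda>p q. Tstep X a p q \<or> Tstep X a q p)\<^sup>*\<^sup>*"

definition Tcls :: "'a psh \<Rightarrow> nat \<Rightarrow> nat \<times> 'a \<Rightarrow> (nat \<times> 'a) set" where
  "Tcls X a p = {q. Teq X a p q}"

definition Tobj :: "'a psh \<Rightarrow> nat \<Rightarrow> (nat \<times> 'a) set set" where
  "Tobj X a = {Tcls X a (b, x) | b x. x \<in> fst X (a + b)}"

definition Tact :: "'a psh \<Rightarrow> nat \<Rightarrow> nat \<Rightarrow> (nat \<Rightarrow> nat) \<Rightarrow> (nat \<times> 'a) set \<Rightarrow> (nat \<times> 'a) set" where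
  "Tact X a a' f \<xi> = (case SOME p. p \<in> \<xi> of (b, x) \<Rightarrow>
       Tcls X a' (b, snd X (a + b) (a' + b) (plus_l a a' f) x))"

definition T :: "'a psh \<Rightarrow> (nat \<times> 'a) set psh" where
  "T X = (Tobj X, Tact X)"

definition eta :: "'a psh \<Rightarrow> nat \<Rightarrow> 'a \<Rightarrow> (nat \<times> 'a) set" where
  "eta X a x = Tcls X a (0, x)"

definition Tmap :: "'b psh \<Rightarrow> (nat \<Rightarrow> 'a \<Rightarrow> 'b) \<Rightarrow> nat \<Rightarrow> (nat \<times> 'a) set \<Rightarrow> (nat \<times> 'b) set" where
  "Tmap Y \<phi> a \<xi> = (case SOME p. p \<in> \<xi> of (b, x) \<Rightarrow> Tcls Y a (b, \<phi> (a + b) x))"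

text \<open>Multiplication \<mu>_X : TTX \<rightarrow> TX, induced by (a+c)+b = a+(c+b).\<close>
definition mu :: "'a psh \<Rightarrow> nat \<Rightarrow> (nat \<times> (nat \<times> 'a) set) set \<Rightarrow> (nat \<times> 'a) set" where
  "mu X a \<Xi> = (case SOME p. p \<in> \<Xi> of (c, \<xi>) \<Rightarrow>
      (case SOME q. q \<in> \<xi> of (b, x) \<Rightarrow> Tcls X a (c + b, x)))"

text \<open>Sobriety: \<eta>_X is an equalizer of \<eta>_{TX}, T\<eta>_X (limits in the presheaf
  category are computed pointwise).\<close>
definition equalizing :: "'a psh \<Rightarrow> nat \<Rightarrow> (nat \<times> 'a) set set" where
  "equalizing X a = {\<xi> \<in> Tobj X a. eta (T X) a \<xi> = Tmap (T X) (eta X) a \<xi>}"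

definition sober :: "'a psh \<Rightarrow> bool" where
  "sober X \<longleftrightarrow> (\<forall>a. inj_on (eta X a) (fst X a) \<and> eta X a ` fst X a = equalizing X a)"

text \<open>DX as the equalizing subfunctor of TX; \<theta>_X is the inclusion.\<close>
definition D :: "'a psh \<Rightarrow> (nat \<times> 'a) set psh" where
  "D X = (equalizing X, Tact X)"

text \<open>m_X : DDX \<rightarrow> DX, determined by \<theta>_X \<circ> m_X = \<mu>_X \<circ> T\<theta>_X \<circ> \<theta>_{DX}.\<close>
definition mD :: "'a psh \<Rightarrow> nat \<Rightarrow> (nat \<times> (nat \<times> 'a) set) set \<Rightarrow> (nat \<times> 'a) set" where
  "mD X a \<zeta> = mu X a (Tmap (T X) (\<lambda>n \<xi>. \<xi>) a \<zeta>)"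

definition inj_pullback ::
  "nat \<Rightarrow> nat \<Rightarrow> nat \<Rightarrow> (nat \<Rightarrow> nat) \<Rightarrow> (nat \<Rightarrow> nat) \<Rightarrow> nat \<Rightarrow> (nat \<Rightarrow> nat) \<Rightarrow> (nat \<Rightarrow> nat) \<Rightarrow> bool" where
  "inj_pullback n m p f g k h j \<longleftrightarrow>
     injm n p f \<and> injm m p g \<and> injm k n h \<and> injm k m j \<and> (\<forall>i<k. f (h i) = g (j i)) \<and>
     (\<forall>q u v. injm q n u \<and> injm q m v \<and> (\<forall>i<q. f (u i) = g (v i)) \<longrightarrow>
        (\<exists>w. injm q k w \<and> (\<forall>i<q. h (w i) = u i \<and> j (w i) = v i) \<and>
           (\<forall>w'. injm q k w' \<and> (\<forall>i<q. h (w' i) = u i \<and> j (w' i) = v i) \<longrightarrow>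
                 (\<forall>i<q. w' i = w i))))"

definition set_pullback ::
  "'a psh \<Rightarrow> nat \<Rightarrow> nat \<Rightarrow> nat \<Rightarrow> (nat \<Rightarrow> nat) \<Rightarrow> (nat \<Rightarrow> nat) \<Rightarrow> nat \<Rightarrow> (nat \<Rightarrow> nat) \<Rightarrow> (nat \<Rightarrow> nat) \<Rightarrow> bool" where
  "set_pullback X n m p f g k h j \<longleftrightarrow>
     (\<forall>x\<in>fst X n. \<forall>y\<in>fst X m. snd X n p f x = snd X m p g y \<longrightarrow>
        (\<exists>!z. z \<in> fst X k \<and> snd X k n h z = x \<and> snd X k m j z = y))"

definition nominal :: "'a psh \<Rightarrow> bool" where
  "nominal X \<longleftrightarrow> (\<forall>n m p f g k h j. inj_pullback n m p f g k h j \<longrightarrow> set_pullback X n m p f g k h j)"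

end

theory Submission
  imports Defs
begin


lemma injm_le: "injm n m f \<Longrightarrow> n \<le> m"
  unfolding injm_def
  by (metis card_image card_lessThan card_mono finite_lessThan)

lemma injm_comp: "injm n m f \<Longrightarrow> injm m p g \<Longrightarrow> injm n p (g \<circ> f)"
  unfolding injm_def by (auto intro: comp_inj_on simp: inj_on_def image_subset_iff)

lemma injm_mono: "injm n m f \<Longrightarrow> m \<le> m' \<Longrightarrow> injm n m' f"
  unfolding injm_def by auto

lemma injm_cong: "injm n m f \<Longrightarrow> (\<And>k. k < n \<Longrightarrow> f k = g k) \<Longrightarrow> injm n m g"
  unfolding injm_def inj_on_def by (auto simp: image_subset_iff)

lemma injm_id: "n \<le> m \<Longrightarrow> injm n m id"
  unfolding injm_def by auto

lemma injm_id': "n \<le> m \<Longrightarrow> injm n m (\<lambda>k. k)"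
  unfolding injm_def by auto

lemma injm_0: "injm 0 m f"
  unfolding injm_def by auto

lemma injmI: "(\<And>i. i < n \<Longrightarrow> f i < m) \<Longrightarrow> (\<And>i j. i < n \<Longrightarrow> j < n \<Longrightarrow> f i = f j \<Longrightarrow> i = j) \<Longrightarrow> injm n m f"
  unfolding injm_def inj_on_def by auto

lemma injmD: "injm n m f \<Longrightarrow> i < n \<Longrightarrow> f i < m"
  "injm n m f \<Longrightarrow> i < n \<Longrightarrow> j < n \<Longrightarrow> f i = f j \<Longrightarrow> i = j"
  unfolding injm_def inj_on_def by auto

lemma injm_plus_r: "injm b c f \<Longrightarrow> injm (a+b) (a+c) (plus_r a f)"
proof (rule injmI)
  fix i assume f: "injm b c f" and i: "i < a + b"
  show "plus_r a f i < a + c"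
    using injmD(1)[OF f, of "i - a"] i unfolding plus_r_def by auto
next
  fix i j assume f: "injm b c f" and i: "i < a + b" and j: "j < a + b" and e: "plus_r a f i = plus_r a f j"
  show "i = j"
  proof (cases "i < a")
    case True
    then show ?thesis using e unfolding plus_r_def by (auto split: if_splits)
  next
    case False
    then have "\<not> j < a" using e i unfolding plus_r_def by (auto split: if_splits)
    then have "f (i - a) = f (j - a)" using e \<open>\<not> i < a\<close> unfolding plus_r_def by auto
    then have "i - a = j - a" using injmD(2)[OF f, of "i - a" "j - a"] i j \<open>\<not> i < a\<close> \<open>\<not> j < a\<close> by linarith
    then show ?thesis using \<open>\<not> i < a\<close> \<open>\<not> j < a\<close> by linarith
  qed
qed

lemma injm_plus_l: "injm a a' f \<Longrightarrow> injm (a+b) (a'+b) (plus_l a a' f)"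
proof (rule injmI)
  fix i assume f: "injm a a' f" and i: "i < a + b"
  show "plus_l a a' f i < a' + b"
    using injmD(1)[OF f, of i] i unfolding plus_l_def by auto
next
  fix i j assume f: "injm a a' f" and i: "i < a + b" and j: "j < a + b" and e: "plus_l a a' f i = plus_l a a' f j"
  show "i = j"
  proof (cases "i < a"; cases "j < a")
    assume "i < a" "j < a" then show ?thesis using e injmD(2)[OF f, of i j] unfolding plus_l_def by auto
  next
    assume "i < a" "\<not> j < a" then show ?thesis using e injmD(1)[OF f, of i] unfolding plus_l_def by auto
  next
    assume "\<not> i < a" "j < a" then show ?thesis using e injmD(1)[OF f, of j] unfolding plus_l_def by auto
  next
    assume "\<not> i < a" "\<not> j < a" then show ?thesis using e unfolding plus_l_def by auto
  qed
qed

lemma injm_shift: "injm b c f \<Longrightarrow> injm b (d + c) (\<lambda>j. d + f j)"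
  unfolding injm_def inj_on_def by (auto simp: image_subset_iff)

lemma extend_inj:
  assumes "A \<subseteq> {..<N}" "inj_on \<phi> A" "\<phi> ` A \<subseteq> {..<M}"
  shows "\<exists>\<rho>. injm N (M+N) \<rho> \<and> (\<forall>i\<in>A. \<rho> i = \<phi> i)"
proof -
  define \<rho> where "\<rho> = (\<lambda>i. if i \<in> A then \<phi> i else M + i)"
  have "injm N (M+N) \<rho>"
  proof (rule injmI)
    fix i assume "i < N" then show "\<rho> i < M + N" using assms unfolding \<rho>_def by auto
  next
    fix i j assume ij: "i < N" "j < N" and e: "\<rho> i = \<rho> j"
    have lt: "\<And>k. k \<in> A \<Longrightarrow> \<phi> k < M" using assms(3) by auto
    show "i = j"
    proof (cases "i \<in> A"; cases "j \<in> A")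
      assume "i \<in> A" "j \<in> A" then show "i = j" using e assms(2) unfolding \<rho>_def by (auto dest: inj_onD)
    next
      assume "i \<in> A" "j \<notin> A" then show "i = j" using e lt[of i] unfolding \<rho>_def by auto
    next
      assume "i \<notin> A" "j \<in> A" then show "i = j" using e lt[of j] unfolding \<rho>_def by auto
    next
      assume "i \<notin> A" "j \<notin> A" then show "i = j" using e unfolding \<rho>_def by auto
    qed
  qed
  thus ?thesis unfolding \<rho>_def by auto
qed

lemma transfer_inj:
  assumes "inj_on \<sigma> B" "inj_on \<tau> B" "\<sigma> ` B \<subseteq> {..<N}" "\<tau> ` B \<subseteq> {..<M}"
  shows "\<exists>\<rho>. injm N (M+N) \<rho> \<and> (\<forall>j\<in>B. \<rho> (\<sigma> j) = \<tau> j)"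
proof -
  have "inj_on (\<tau> \<circ> inv_into B \<sigma>) (\<sigma> ` B)"
    using assms by (smt (verit, best) comp_apply imageE inj_on_def inv_into_f_f)
  moreover have "(\<tau> \<circ> inv_into B \<sigma>) ` (\<sigma> ` B) \<subseteq> {..<M}"
    using assms by (auto simp: inv_into_f_f)
  ultimately obtain \<rho> where "injm N (M+N) \<rho>" "\<forall>i\<in>\<sigma>`B. \<rho> i = (\<tau> \<circ> inv_into B \<sigma>) i"
    using extend_inj[of "\<sigma> ` B" N "\<tau> \<circ> inv_into B \<sigma>" M] assms by blast
  thus ?thesis using assms by (auto simp: inv_into_f_f)
qed

lemma transfer_injm:
  assumes "\<And>i j. i < n \<Longrightarrow> j < n \<Longrightarrow> \<sigma> i = \<sigma> j \<Longrightarrow> i = j"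
    "\<And>i j. i < n \<Longrightarrow> j < n \<Longrightarrow> \<tau> i = \<tau> j \<Longrightarrow> i = j"
    "\<And>i. i < n \<Longrightarrow> \<sigma> i < N" "\<And>i. i < n \<Longrightarrow> \<tau> i < M"
  shows "\<exists>\<rho>. injm N (M+N) \<rho> \<and> (\<forall>j<n. \<rho> (\<sigma> j) = \<tau> j)"
proof -
  have "inj_on \<sigma> {..<n}" "inj_on \<tau> {..<n}" "\<sigma> ` {..<n} \<subseteq> {..<N}" "\<tau> ` {..<n} \<subseteq> {..<M}"
    using assms unfolding inj_on_def by auto
  from transfer_inj[OF this] show ?thesis by auto
qed

lemma perm_extend:
  assumes "injm a n h"
  shows "\<exists>\<sigma> \<pi>. injm n n \<sigma> \<and> injm n n \<pi> \<and> (\<forall>i<a. \<sigma> i = h i) \<and>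
     (\<forall>i<n. \<sigma> (\<pi> i) = i) \<and> (\<forall>i<n. \<pi> (\<sigma> i) = i)"
proof -
  have an: "a \<le> n" using injm_le[OF assms] .
  have hi: "inj_on h {..<a}" "h ` {..<a} \<subseteq> {..<n}" using assms unfolding injm_def by auto
  have "card {a..<n} = card ({..<n} - h ` {..<a})"
    using hi an by (simp add: card_Diff_subset card_image)
  then obtain e where e: "bij_betw e {a..<n} ({..<n} - h ` {..<a})"
    using finite_same_card_bij by blast
  define \<sigma> where "\<sigma> = (\<lambda>i. if i < a then h i else e i)"
  have bs: "bij_betw \<sigma> {..<n} {..<n}"
  proof -
    have "bij_betw \<sigma> ({..<a} \<union> {a..<n}) (h ` {..<a} \<union> ({..<n} - h ` {..<a}))"
    proof (rule bij_betw_combine)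
      show "bij_betw \<sigma> {..<a} (h ` {..<a})"
        using hi unfolding \<sigma>_def bij_betw_def inj_on_def by auto
      show "bij_betw \<sigma> {a..<n} ({..<n} - h ` {..<a})"
        using e unfolding \<sigma>_def bij_betw_def inj_on_def by (auto simp: image_def)
    qed auto
    moreover have "{..<a} \<union> {a..<n} = {..<n}" using an by auto
    moreover have "h ` {..<a} \<union> ({..<n} - h ` {..<a}) = {..<n}" using hi by auto
    ultimately show ?thesis by simp
  qed
  define \<pi> where "\<pi> = inv_into {..<n} \<sigma>"
  have bp: "bij_betw \<pi> {..<n} {..<n}" unfolding \<pi>_def using bs by (rule bij_betw_inv_into)
  show ?thesis
    apply (rule exI[of _ \<sigma>], rule exI[of _ \<pi>])
    using bs bp bij_betw_inv_into_right[OF bs] bij_betw_inv_into_left[OF bs]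
    unfolding injm_def bij_betw_def \<pi>_def
    by (auto simp: \<sigma>_def)
qed



section \<open>Functor basics\<close>

lemma F_mem: "is_inj_functor X \<Longrightarrow> injm n m f \<Longrightarrow> x \<in> fst X n \<Longrightarrow> snd X n m f x \<in> fst X m"
  unfolding is_inj_functor_def by blast

lemma F_cong: "is_inj_functor X \<Longrightarrow> injm n m f \<Longrightarrow> (\<And>k. k < n \<Longrightarrow> f k = g k) \<Longrightarrow> x \<in> fst X n \<Longrightarrow>
   snd X n m f x = snd X n m g x"
  unfolding is_inj_functor_def by blast

lemma F_idlike: "is_inj_functor X \<Longrightarrow> x \<in> fst X n \<Longrightarrow> (\<And>k. k < n \<Longrightarrow> f k = k) \<Longrightarrow> snd X n n f x = x"
proof -
  assume F: "is_inj_functor X" and x: "x \<in> fst X n" and f: "\<And>k. k < n \<Longrightarrow> f k = k"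
  have "snd X n n id x = snd X n n f x"
    by (rule F_cong[OF F injm_id[of n n]]) (auto simp: f x)
  then have "snd X n n f x = snd X n n id x" by simp
  also have "\<dots> = x" using F x unfolding is_inj_functor_def by blast
  finally show ?thesis .
qed

lemma F_comp: "is_inj_functor X \<Longrightarrow> injm n m f \<Longrightarrow> injm m p g \<Longrightarrow> x \<in> fst X n \<Longrightarrow>
   (\<And>k. k < n \<Longrightarrow> g (f k) = h k) \<Longrightarrow> snd X m p g (snd X n m f x) = snd X n p h x"
proof -
  assume F: "is_inj_functor X" and f: "injm n m f" and g: "injm m p g" and x: "x \<in> fst X n"
    and h: "\<And>k. k < n \<Longrightarrow> g (f k) = h k"
  have "snd X n p (g \<circ> f) x = snd X m p g (snd X n m f x)"
    using F f g x unfolding is_inj_functor_def by blast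
  moreover have "snd X n p (g \<circ> f) x = snd X n p h x"
    using F_cong[OF F injm_comp[OF f g]] h x by auto
  ultimately show ?thesis by simp
qed

lemma plus_r_comp: "plus_r a g (plus_r a f k) = plus_r a (g \<circ> f) k"
  unfolding plus_r_def by auto

lemma plus_r_lt: "k < a \<Longrightarrow> plus_r a f k = k"
  unfolding plus_r_def by auto

lemma plus_r_ge: "plus_r a f (a + j) = a + f j"
  unfolding plus_r_def by auto

lemma plus_l_lt: "k < a \<Longrightarrow> plus_l a a' f k = f k"
  unfolding plus_l_def by auto

lemma plus_l_ge: "plus_l a a' f (a + j) = a' + j"
  unfolding plus_l_def by auto

section \<open>Joinability\<close>

definition J :: "'a psh \<Rightarrow> nat \<Rightarrow> nat \<times> 'a \<Rightarrow> nat \<times> 'a \<Rightarrow> bool" where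
  "J X a p q \<longleftrightarrow> snd p \<in> fst X (a + fst p) \<and> snd q \<in> fst X (a + fst q) \<and>
     (\<exists>c f g. injm (fst p) c f \<and> injm (fst q) c g \<and>
        snd X (a + fst p) (a + c) (plus_r a f) (snd p) = snd X (a + fst q) (a + c) (plus_r a g) (snd q))"

lemma J_I: "snd p \<in> fst X (a + fst p) \<Longrightarrow> snd q \<in> fst X (a + fst q) \<Longrightarrow> injm (fst p) c f \<Longrightarrow> injm (fst q) c g \<Longrightarrow>
   snd X (a + fst p) (a + c) (plus_r a f) (snd p) = snd X (a + fst q) (a + c) (plus_r a g) (snd q) \<Longrightarrow> J X a p q"
  unfolding J_def by blast

lemma J_refl: "snd p \<in> fst X (a + fst p) \<Longrightarrow> J X a p p"
  by (rule J_I[of p X a p "fst p" id id]) (auto intro: injm_id)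

lemma J_sym: "J X a p q \<Longrightarrow> J X a q p"
proof -
  assume "J X a p q"
  then obtain c f g where h: "snd p \<in> fst X (a + fst p)" "snd q \<in> fst X (a + fst q)"
    "injm (fst p) c f" "injm (fst q) c g"
    "snd X (a + fst p) (a + c) (plus_r a f) (snd p) = snd X (a + fst q) (a + c) (plus_r a g) (snd q)"
    unfolding J_def by blast
  show ?thesis by (rule J_I[OF h(2,1,4,3) h(5)[symmetric]])
qed

lemma J_trans:
  assumes F: "is_inj_functor X" and pq: "J X a p q" and qr: "J X a q r"
  shows "J X a p r"
proof -
  obtain b x b' x' b'' x'' where P: "p = (b,x)" "q = (b',x')" "r = (b'',x'')"
    by (metis surj_pair)
  from pq obtain c f g where x: "x \<in> fst X (a+b)" and x': "x' \<in> fst X (a+b')" and f: "injm b c f" and g: "injm b' c g"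
    and e1: "snd X (a+b) (a+c) (plus_r a f) x = snd X (a+b') (a+c) (plus_r a g) x'"
    unfolding J_def P by auto
  from qr obtain c' f' g' where x'': "x'' \<in> fst X (a+b'')" and f': "injm b' c' f'" and g': "injm b'' c' g'"
    and e2: "snd X (a+b') (a+c') (plus_r a f') x' = snd X (a+b'') (a+c') (plus_r a g') x''"
    unfolding J_def P by auto
  obtain \<rho> where \<rho>: "injm c' (c+c') \<rho>" "\<forall>j<b'. \<rho> (f' j) = g j"
    using transfer_injm[of b' f' g c' c, OF injmD(2)[OF f'] injmD(2)[OF g] injmD(1)[OF f'] injmD(1)[OF g]] by blast
  have u: "injm (a+c) (a+(c+c')) (plus_r a id)" by (rule injm_plus_r[OF injm_id]) simp
  have pr: "injm (a+c') (a+(c+c')) (plus_r a \<rho>)" by (rule injm_plus_r[OF \<rho>(1)])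
  have "snd X (a+b) (a+(c+c')) (plus_r a f) x = snd X (a+c) (a+(c+c')) (plus_r a id) (snd X (a+b) (a+c) (plus_r a f) x)"
    by (rule sym, rule F_comp[OF F injm_plus_r[OF f] u x]) (simp add: plus_r_comp)
  also have "\<dots> = snd X (a+c) (a+(c+c')) (plus_r a id) (snd X (a+b') (a+c) (plus_r a g) x')" by (simp add: e1)
  also have "\<dots> = snd X (a+b') (a+(c+c')) (plus_r a (\<rho> \<circ> f')) x'"
    by (rule F_comp[OF F injm_plus_r[OF g] u x']) (auto simp: plus_r_def \<rho>)
  also have "\<dots> = snd X (a+c') (a+(c+c')) (plus_r a \<rho>) (snd X (a+b') (a+c') (plus_r a f') x')"
    by (rule sym, rule F_comp[OF F injm_plus_r[OF f'] pr x']) (simp add: plus_r_comp)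
  also have "\<dots> = snd X (a+c') (a+(c+c')) (plus_r a \<rho>) (snd X (a+b'') (a+c') (plus_r a g') x'')" by (simp add: e2)
  also have "\<dots> = snd X (a+b'') (a+(c+c')) (plus_r a (\<rho> \<circ> g')) x''"
    by (rule F_comp[OF F injm_plus_r[OF g'] pr x'']) (simp add: plus_r_comp)
  finally have "snd X (a+b) (a+(c+c')) (plus_r a f) x = snd X (a+b'') (a+(c+c')) (plus_r a (\<rho> \<circ> g')) x''" .
  moreover have "injm b (c+c') f" using injm_mono[OF f] by simp
  moreover have "injm b'' (c+c') (\<rho> \<circ> g')" using injm_comp[OF g' \<rho>(1)] .
  ultimately show ?thesis unfolding J_def P using x x'' by auto
qed

lemma Tstep_J: "is_inj_functor X \<Longrightarrow> Tstep X a p q \<Longrightarrow> J X a p q"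
proof -
  assume F: "is_inj_functor X" and s: "Tstep X a p q"
  obtain b x b' x' where P: "p = (b,x)" "q = (b',x')" by (metis surj_pair)
  from s obtain f where x: "x \<in> fst X (a+b)" and f: "injm b b' f" and q: "x' = snd X (a+b) (a+b') (plus_r a f) x"
    unfolding Tstep_def P by auto
  have x': "x' \<in> fst X (a+b')" using F_mem[OF F injm_plus_r[OF f] x] q by simp
  have idl: "snd X (a+b') (a+b') (plus_r a id) x' = x'" by (rule F_idlike[OF F x']) (simp add: plus_r_def)
  show ?thesis unfolding P
    by (rule J_I[of "(b,x)" X a "(b',x')" b' f id]) (use x x' f q idl in \<open>auto intro: injm_id\<close>)
qed

lemma J_valid: "J X a p q \<Longrightarrow> snd q \<in> fst X (a + fst q)"
  unfolding J_def by auto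

lemma Teq_imp_J:
  assumes F: "is_inj_functor X" and p: "snd p \<in> fst X (a + fst p)" and t: "Teq X a p q"
  shows "J X a p q"
  using t[unfolded Teq_def]
proof (induction rule: rtranclp_induct)
  case base then show ?case using J_refl[OF p] .
next
  case (step y z)
  then have "J X a y z" using Tstep_J[OF F] J_sym by metis
  with step show ?case using J_trans[OF F] by blast
qed

lemma J_imp_Teq:
  assumes F: "is_inj_functor X" and j: "J X a p q"
  shows "Teq X a p q"
proof -
  obtain b x b' x' where P: "p = (b,x)" "q = (b',x')" by (metis surj_pair)
  from j obtain c f g where x: "x \<in> fst X (a+b)" and x': "x' \<in> fst X (a+b')" and f: "injm b c f" and g: "injm b' c g"
    and e: "snd X (a+b) (a+c) (plus_r a f) x = snd X (a+b') (a+c) (plus_r a g) x'"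
    unfolding J_def P by auto
  let ?r = "(c, snd X (a+b) (a+c) (plus_r a f) x)"
  have "Tstep X a p ?r" unfolding Tstep_def P using x f by auto
  moreover have "Tstep X a q ?r" unfolding Tstep_def P using x' g e by auto
  ultimately have 1: "(\<lambda>p q. Tstep X a p q \<or> Tstep X a q p) p ?r" "(\<lambda>p q. Tstep X a p q \<or> Tstep X a q p) ?r q"
    by auto
  show ?thesis unfolding Teq_def
    by (rule rtranclp.rtrancl_into_rtrancl[OF r_into_rtranclp[of "\<lambda>p q. Tstep X a p q \<or> Tstep X a q p", OF 1(1)] 1(2)])
qed

lemma Teq_iff_J: "is_inj_functor X \<Longrightarrow> snd p \<in> fst X (a + fst p) \<Longrightarrow> Teq X a p q \<longleftrightarrow> J X a p q"
  using Teq_imp_J J_imp_Teq by blast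

lemma Tcls_self: "p \<in> Tcls X a p"
  unfolding Tcls_def Teq_def by simp

lemma Tcls_mem: "is_inj_functor X \<Longrightarrow> snd p \<in> fst X (a + fst p) \<Longrightarrow> q \<in> Tcls X a p \<longleftrightarrow> J X a p q"
  unfolding Tcls_def using Teq_iff_J by blast

lemma Tcls_eq_iff:
  assumes F: "is_inj_functor X" and p: "snd p \<in> fst X (a + fst p)" and q: "snd q \<in> fst X (a + fst q)"
  shows "Tcls X a p = Tcls X a q \<longleftrightarrow> J X a p q"
proof
  assume "Tcls X a p = Tcls X a q"
  then have "q \<in> Tcls X a p" using Tcls_self by metis
  then show "J X a p q" using Tcls_mem[OF F p] by blast
next
  assume j: "J X a p q"
  show "Tcls X a p = Tcls X a q"
  proof (rule set_eqI)
    fix r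
    show "r \<in> Tcls X a p \<longleftrightarrow> r \<in> Tcls X a q"
      using Tcls_mem[OF F p] Tcls_mem[OF F q] J_trans[OF F] J_sym j by metis
  qed
qed

lemma Tcls_rep:
  assumes F: "is_inj_functor X" and p: "snd p \<in> fst X (a + fst p)" and r: "r \<in> Tcls X a p"
  shows "snd r \<in> fst X (a + fst r)" "Tcls X a r = Tcls X a p"
proof -
  have j: "J X a p r" using Tcls_mem[OF F p] r by blast
  show rv: "snd r \<in> fst X (a + fst r)" using J_valid[OF j] .
  show "Tcls X a r = Tcls X a p" using Tcls_eq_iff[OF F rv p] J_sym[OF j] by blast
qed

lemma Tobj_some:
  assumes F: "is_inj_functor X" and xi: "\<xi> \<in> Tobj X a"
  obtains b x where "(SOME p. p \<in> \<xi>) = (b,x)" "x \<in> fst X (a+b)" "\<xi> = Tcls X a (b,x)"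
proof -
  from xi obtain b0 x0 where x0: "x0 \<in> fst X (a+b0)" and xe: "\<xi> = Tcls X a (b0,x0)"
    unfolding Tobj_def by auto
  have "(SOME p. p \<in> \<xi>) \<in> \<xi>" using xe Tcls_self by (metis someI)
  then obtain b x where s: "(SOME p. p \<in> \<xi>) = (b,x)" "(b,x) \<in> \<xi>" by (metis surj_pair)
  have "x \<in> fst X (a+b)" "Tcls X a (b,x) = \<xi>" using Tcls_rep[OF F, of "(b0,x0)" a "(b,x)"] x0 s xe by auto
  thus ?thesis using that s by auto
qed

lemma Tobj_cls: "x \<in> fst X (a+b) \<Longrightarrow> Tcls X a (b,x) \<in> Tobj X a"
  unfolding Tobj_def by auto

lemma Tcls_eq_J:
  "is_inj_functor X \<Longrightarrow> x \<in> fst X (a+b) \<Longrightarrow> x' \<in> fst X (a+b') \<Longrightarrow>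
   Tcls X a (b,x) = Tcls X a (b',x') \<longleftrightarrow>
   (\<exists>c f g. injm b c f \<and> injm b' c g \<and> snd X (a+b) (a+c) (plus_r a f) x = snd X (a+b') (a+c) (plus_r a g) x')"
  using Tcls_eq_iff[of X "(b,x)" a "(b',x')"] unfolding J_def by auto



lemma Tact_cls:
  assumes F: "is_inj_functor X" and f: "injm a a' f" and x: "x \<in> fst X (a+b)"
  shows "Tact X a a' f (Tcls X a (b,x)) = Tcls X a' (b, snd X (a+b) (a'+b) (plus_l a a' f) x)"
proof -
  obtain b0 x0 where s: "(SOME p. p \<in> Tcls X a (b,x)) = (b0,x0)" and x0: "x0 \<in> fst X (a+b0)"
    and ee: "Tcls X a (b,x) = Tcls X a (b0,x0)"
    using Tobj_some[OF F Tobj_cls[OF x]] by metis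
  from ee obtain c u v where u: "injm b0 c u" and v: "injm b c v"
    and e: "snd X (a+b0) (a+c) (plus_r a u) x0 = snd X (a+b) (a+c) (plus_r a v) x"
    using Tcls_eq_J[OF F x0 x] by metis
  have fl: "\<And>k. k < a \<Longrightarrow> f k < a'" using f by (rule injmD)
  have "snd X (a'+b0) (a'+c) (plus_r a' u) (snd X (a+b0) (a'+b0) (plus_l a a' f) x0)
      = snd X (a+b0) (a'+c) (\<lambda>k. if k < a then f k else a' + u (k - a)) x0"
    by (rule F_comp[OF F injm_plus_l[OF f] injm_plus_r[OF u] x0]) (auto simp: plus_l_def plus_r_def fl)
  also have "\<dots> = snd X (a+c) (a'+c) (plus_l a a' f) (snd X (a+b0) (a+c) (plus_r a u) x0)"
    by (rule sym, rule F_comp[OF F injm_plus_r[OF u] injm_plus_l[OF f] x0]) (auto simp: plus_l_def plus_r_def)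
  also have "\<dots> = snd X (a+c) (a'+c) (plus_l a a' f) (snd X (a+b) (a+c) (plus_r a v) x)" by (simp add: e)
  also have "\<dots> = snd X (a+b) (a'+c) (\<lambda>k. if k < a then f k else a' + v (k - a)) x"
    by (rule F_comp[OF F injm_plus_r[OF v] injm_plus_l[OF f] x]) (auto simp: plus_l_def plus_r_def)
  also have "\<dots> = snd X (a'+b) (a'+c) (plus_r a' v) (snd X (a+b) (a'+b) (plus_l a a' f) x)"
    by (rule sym, rule F_comp[OF F injm_plus_l[OF f] injm_plus_r[OF v] x]) (auto simp: plus_l_def plus_r_def fl)
  finally have eq: "snd X (a'+b0) (a'+c) (plus_r a' u) (snd X (a+b0) (a'+b0) (plus_l a a' f) x0) =
     snd X (a'+b) (a'+c) (plus_r a' v) (snd X (a+b) (a'+b) (plus_l a a' f) x)" .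
  have m0: "snd X (a+b0) (a'+b0) (plus_l a a' f) x0 \<in> fst X (a'+b0)" by (rule F_mem[OF F injm_plus_l[OF f] x0])
  have m1: "snd X (a+b) (a'+b) (plus_l a a' f) x \<in> fst X (a'+b)" by (rule F_mem[OF F injm_plus_l[OF f] x])
  have "Tcls X a' (b0, snd X (a+b0) (a'+b0) (plus_l a a' f) x0) = Tcls X a' (b, snd X (a+b) (a'+b) (plus_l a a' f) x)"
    using Tcls_eq_J[OF F m0 m1] u v eq by blast
  thus ?thesis unfolding Tact_def s by simp
qed

definition natural :: "'a psh \<Rightarrow> 'b psh \<Rightarrow> (nat \<Rightarrow> 'a \<Rightarrow> 'b) \<Rightarrow> bool" where
  "natural X Y \<phi> \<longleftrightarrow> (\<forall>n x. x \<in> fst X n \<longrightarrow> \<phi> n x \<in> fst Y n) \<and>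
     (\<forall>n m f x. injm n m f \<longrightarrow> x \<in> fst X n \<longrightarrow> \<phi> m (snd X n m f x) = snd Y n m f (\<phi> n x))"

lemma Tmap_cls:
  assumes F: "is_inj_functor X" and G: "is_inj_functor Y" and N: "natural X Y \<phi>" and x: "x \<in> fst X (a+b)"
  shows "Tmap Y \<phi> a (Tcls X a (b,x)) = Tcls Y a (b, \<phi> (a+b) x)"
proof -
  obtain b0 x0 where s: "(SOME p. p \<in> Tcls X a (b,x)) = (b0,x0)" and x0: "x0 \<in> fst X (a+b0)"
    and ee: "Tcls X a (b,x) = Tcls X a (b0,x0)"
    using Tobj_some[OF F Tobj_cls[OF x]] by metis
  from ee obtain c u v where u: "injm b0 c u" and v: "injm b c v"
    and e: "snd X (a+b0) (a+c) (plus_r a u) x0 = snd X (a+b) (a+c) (plus_r a v) x"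
    using Tcls_eq_J[OF F x0 x] by metis
  have m0: "\<phi> (a+b0) x0 \<in> fst Y (a+b0)" and m1: "\<phi> (a+b) x \<in> fst Y (a+b)" using N x0 x unfolding natural_def by auto
  have "snd Y (a+b0) (a+c) (plus_r a u) (\<phi> (a+b0) x0) = \<phi> (a+c) (snd X (a+b0) (a+c) (plus_r a u) x0)"
    using N injm_plus_r[OF u] x0 unfolding natural_def by auto
  also have "\<dots> = snd Y (a+b) (a+c) (plus_r a v) (\<phi> (a+b) x)"
    using N injm_plus_r[OF v] x e unfolding natural_def by auto
  finally have "Tcls Y a (b0, \<phi> (a+b0) x0) = Tcls Y a (b, \<phi> (a+b) x)"
    using Tcls_eq_J[OF G m0 m1] u v by blast
  thus ?thesis unfolding Tmap_def s by simp
qed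

lemma T_functor:
  assumes F: "is_inj_functor X"
  shows "is_inj_functor (T X)"
  unfolding is_inj_functor_def T_def fst_conv snd_conv
proof (intro conjI allI impI)
  fix n m f \<xi> assume f: "injm n m f" and xi: "\<xi> \<in> Tobj X n"
  obtain b x where x: "x \<in> fst X (n+b)" and xe: "\<xi> = Tcls X n (b,x)" using Tobj_some[OF F xi] by metis
  show "Tact X n m f \<xi> \<in> Tobj X m" unfolding xe Tact_cls[OF F f x]
    by (rule Tobj_cls, rule F_mem[OF F injm_plus_l[OF f] x])
next
  fix n \<xi> assume xi: "\<xi> \<in> Tobj X n"
  obtain b x where x: "x \<in> fst X (n+b)" and xe: "\<xi> = Tcls X n (b,x)" using Tobj_some[OF F xi] by metis
  show "Tact X n n id \<xi> = \<xi>" unfolding xe Tact_cls[OF F injm_id[of n n] x, simplified]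
    by (subst F_idlike[OF F x]) (auto simp: plus_l_def)
next
  fix n m p f g \<xi> assume f: "injm n m f" and g: "injm m p g" and xi: "\<xi> \<in> Tobj X n"
  obtain b x where x: "x \<in> fst X (n+b)" and xe: "\<xi> = Tcls X n (b,x)" using Tobj_some[OF F xi] by metis
  have fl: "\<And>k. k < n \<Longrightarrow> f k < m" using f by (rule injmD)
  show "Tact X n p (g \<circ> f) \<xi> = Tact X m p g (Tact X n m f \<xi>)"
    unfolding xe Tact_cls[OF F injm_comp[OF f g] x] Tact_cls[OF F f x]
      Tact_cls[OF F g F_mem[OF F injm_plus_l[OF f] x]]
    by (subst F_comp[OF F injm_plus_l[OF f] injm_plus_l[OF g] x]) (auto simp: plus_l_def fl)
next
  fix n m f g \<xi> assume f: "injm n m f" and fg: "\<forall>k<n. f k = g k" and xi: "\<xi> \<in> Tobj X n"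
  obtain b x where x: "x \<in> fst X (n+b)" and xe: "\<xi> = Tcls X n (b,x)" using Tobj_some[OF F xi] by metis
  have g: "injm n m g" using injm_cong[OF f] fg by auto
  show "Tact X n m f \<xi> = Tact X n m g \<xi>"
    unfolding xe Tact_cls[OF F f x] Tact_cls[OF F g x]
    by (subst F_cong[OF F injm_plus_l[OF f] _ x, of "plus_l n m g"]) (auto simp: plus_l_def fg)
qed

lemma eta_mem: "x \<in> fst X a \<Longrightarrow> eta X a x \<in> Tobj X a"
  unfolding eta_def by (rule Tobj_cls) simp

lemma eta_natural:
  assumes F: "is_inj_functor X"
  shows "natural X (T X) (eta X)"
  unfolding natural_def T_def fst_conv snd_conv
proof (intro conjI allI impI)
  fix n x assume "x \<in> fst X n" then show "eta X n x \<in> Tobj X n" by (rule eta_mem)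
next
  fix n m f x assume f: "injm n m f" and x: "x \<in> fst X n"
  have x0: "x \<in> fst X (n+0)" using x by simp
  show "eta X m (snd X n m f x) = Tact X n m f (eta X n x)"
    unfolding eta_def Tact_cls[OF F f x0]
    using F_cong[OF F f _ x, of "plus_l n m f"] by (simp add: plus_l_def)
qed

lemma mu_cls:
  assumes F: "is_inj_functor X" and x: "x \<in> fst X (a+c+b)"
  shows "mu X a (Tcls (T X) a (c, Tcls X (a+c) (b,x))) = Tcls X a (c+b, x)"
proof -
  have FT: "is_inj_functor (T X)" by (rule T_functor[OF F])
  let ?\<xi> = "Tcls X (a+c) (b,x)"
  have xi: "?\<xi> \<in> fst (T X) (a+c)" unfolding T_def by (simp add: Tobj_cls x)
  obtain c' \<xi>' where s1: "(SOME p. p \<in> Tcls (T X) a (c, ?\<xi>)) = (c', \<xi>')" and xi': "\<xi>' \<in> fst (T X) (a+c')"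
    and ee1: "Tcls (T X) a (c, ?\<xi>) = Tcls (T X) a (c', \<xi>')"
    using Tobj_some[OF FT Tobj_cls[OF xi]] by metis
  have xi'': "\<xi>' \<in> Tobj X (a+c')" using xi' unfolding T_def by simp
  obtain b' x' where s2: "(SOME p. p \<in> \<xi>') = (b', x')" and x': "x' \<in> fst X (a+c'+b')"
    and xe': "\<xi>' = Tcls X (a+c') (b',x')"
    using Tobj_some[OF F xi''] by metis
  from ee1 obtain e f g where f: "injm c e f" and g: "injm c' e g"
    and eq1: "Tact X (a+c) (a+e) (plus_r a f) ?\<xi> = Tact X (a+c') (a+e) (plus_r a g) \<xi>'"
    using Tcls_eq_J[OF FT xi xi'] unfolding T_def by auto
  have pf: "injm (a+c) (a+e) (plus_r a f)" by (rule injm_plus_r[OF f])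
  have pg: "injm (a+c') (a+e) (plus_r a g)" by (rule injm_plus_r[OF g])
  have m1: "snd X (a+c+b) (a+e+b) (plus_l (a+c) (a+e) (plus_r a f)) x \<in> fst X (a+e+b)"
    by (rule F_mem[OF F injm_plus_l[OF pf] x])
  have m2: "snd X (a+c'+b') (a+e+b') (plus_l (a+c') (a+e) (plus_r a g)) x' \<in> fst X (a+e+b')"
    by (rule F_mem[OF F injm_plus_l[OF pg] x'])
  from eq1 have "Tcls X (a+e) (b, snd X (a+c+b) (a+e+b) (plus_l (a+c) (a+e) (plus_r a f)) x) =
     Tcls X (a+e) (b', snd X (a+c'+b') (a+e+b') (plus_l (a+c') (a+e) (plus_r a g)) x')"
    unfolding xe' Tact_cls[OF F pf x] Tact_cls[OF F pg x'] .
  then obtain K h1 h2 where h1: "injm b K h1" and h2: "injm b' K h2"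
    and eq2: "snd X (a+e+b) (a+e+K) (plus_r (a+e) h1) (snd X (a+c+b) (a+e+b) (plus_l (a+c) (a+e) (plus_r a f)) x) =
       snd X (a+e+b') (a+e+K) (plus_r (a+e) h2) (snd X (a+c'+b') (a+e+b') (plus_l (a+c') (a+e) (plus_r a g)) x')"
    using Tcls_eq_J[OF F m1 m2] by blast
  define F1 where "F1 = (\<lambda>j. if j < c then f j else e + h1 (j - c))"
  define G1 where "G1 = (\<lambda>j. if j < c' then g j else e + h2 (j - c'))"
  have fl: "\<And>j. j < c \<Longrightarrow> f j < e" using f by (rule injmD)
  have gl: "\<And>j. j < c' \<Longrightarrow> g j < e" using g by (rule injmD)
  have F1m: "injm (c+b) (e+K) F1"
  proof (rule injmI)
    fix i assume ib: "i < c + b"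
    show "F1 i < e + K"
    proof (cases "i < c")
      case True then show ?thesis using fl[of i] unfolding F1_def by simp
    next
      case False then show ?thesis using injmD(1)[OF h1, of "i - c"] ib unfolding F1_def by simp
    qed
  next
    fix i j assume ij: "i < c + b" "j < c + b" "F1 i = F1 j"
    show "i = j"
    proof (cases "i < c"; cases "j < c")
      assume "i < c" "j < c" then show ?thesis using ij injmD(2)[OF f] unfolding F1_def by auto
    next
      assume "i < c" "\<not> j < c" then show ?thesis using ij fl[of i] unfolding F1_def by auto
    next
      assume "\<not> i < c" "j < c" then show ?thesis using ij fl[of j] unfolding F1_def by auto
    next
      assume a1: "\<not> i < c" "\<not> j < c"
      then have "h1 (i - c) = h1 (j - c)" using ij unfolding F1_def by auto
      then have "i - c = j - c" using injmD(2)[OF h1, of "i - c" "j - c"] ij a1 by linarith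
      then show ?thesis using a1 by linarith
    qed
  qed
  have G1m: "injm (c'+b') (e+K) G1"
  proof (rule injmI)
    fix i assume ib: "i < c' + b'"
    show "G1 i < e + K"
    proof (cases "i < c'")
      case True then show ?thesis using gl[of i] unfolding G1_def by simp
    next
      case False then show ?thesis using injmD(1)[OF h2, of "i - c'"] ib unfolding G1_def by simp
    qed
  next
    fix i j assume ij: "i < c' + b'" "j < c' + b'" "G1 i = G1 j"
    show "i = j"
    proof (cases "i < c'"; cases "j < c'")
      assume "i < c'" "j < c'" then show ?thesis using ij injmD(2)[OF g] unfolding G1_def by auto
    next
      assume "i < c'" "\<not> j < c'" then show ?thesis using ij gl[of i] unfolding G1_def by auto
    next
      assume "\<not> i < c'" "j < c'" then show ?thesis using ij gl[of j] unfolding G1_def by auto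
    next
      assume a1: "\<not> i < c'" "\<not> j < c'"
      then have "h2 (i - c') = h2 (j - c')" using ij unfolding G1_def by auto
      then have "i - c' = j - c'" using injmD(2)[OF h2, of "i - c'" "j - c'"] ij a1 by linarith
      then show ?thesis using a1 by linarith
    qed
  qed
  have xx: "x \<in> fst X (a+(c+b))" using x by (simp add: add.assoc)
  have xx': "x' \<in> fst X (a+(c'+b'))" using x' by (simp add: add.assoc)
  have "snd X (a+(c+b)) (a+(e+K)) (plus_r a F1) x =
     snd X (a+e+b) (a+e+K) (plus_r (a+e) h1) (snd X (a+c+b) (a+e+b) (plus_l (a+c) (a+e) (plus_r a f)) x)"
    apply (simp only: add.assoc[symmetric])
    by (rule sym, rule F_comp[OF F injm_plus_l[OF pf] injm_plus_r[OF h1] x])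
      (auto simp: plus_r_def plus_l_def F1_def fl add.commute)
  also have "\<dots> = snd X (a+e+b') (a+e+K) (plus_r (a+e) h2) (snd X (a+c'+b') (a+e+b') (plus_l (a+c') (a+e) (plus_r a g)) x')"
    by (rule eq2)
  also have "\<dots> = snd X (a+(c'+b')) (a+(e+K)) (plus_r a G1) x'"
    apply (simp only: add.assoc[symmetric])
    by (rule F_comp[OF F injm_plus_l[OF pg] injm_plus_r[OF h2] x'])
      (auto simp: plus_r_def plus_l_def G1_def gl add.commute)
  finally have "Tcls X a (c+b, x) = Tcls X a (c'+b', x')"
    using Tcls_eq_J[OF F xx xx'] F1m G1m by blast
  thus ?thesis unfolding mu_def s1 by (simp add: s2)
qed



definition EQg :: "'a psh \<Rightarrow> nat \<Rightarrow> nat \<Rightarrow> 'a \<Rightarrow> bool" where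
  "EQg X a b x \<longleftrightarrow> (\<exists>C g u. injm b C g \<and> injm b C u \<and> (\<forall>i<b. \<forall>j<b. g i \<noteq> u j) \<and>
     snd X (a+b) (a+C) (plus_r a u) x = snd X (a+b) (a+C) (plus_r a g) x)"

lemma eq_key:
  assumes F: "is_inj_functor X" and x: "x \<in> fst X (a+b)" and g: "injm b c g"
  shows "Tact X a (a+c) (plus_r a f) (Tcls X a (b,x)) = Tact X (a+b) (a+c) (plus_r a g) (eta X (a+b) x) \<longleftrightarrow>
    (\<exists>d u. injm b d u \<and> snd X (a+b) (a+c+d) (plus_r a (\<lambda>j. c + u j)) x = snd X (a+b) (a+c+d) (plus_r a g) x)"
proof -
  have pf: "injm a (a+c) (plus_r a f)" by (rule injmI) (auto simp: plus_r_def)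
  have pg: "injm (a+b) (a+c) (plus_r a g)" by (rule injm_plus_r[OF g])
  have x0: "x \<in> fst X (a+b+0)" using x by simp
  let ?y1 = "snd X (a+b) (a+c+b) (plus_l a (a+c) (plus_r a f)) x"
  let ?y2 = "snd X (a+b) (a+c) (plus_l (a+b) (a+c) (plus_r a g)) x"
  have y1: "?y1 \<in> fst X (a+c+b)" by (rule F_mem[OF F injm_plus_l[OF pf] x])
  have y2: "?y2 \<in> fst X (a+c+0)" using F_mem[OF F injm_plus_l[OF pg] x0] by simp
  have e1: "Tact X a (a+c) (plus_r a f) (Tcls X a (b,x)) = Tcls X (a+c) (b, ?y1)"
    by (rule Tact_cls[OF F pf x])
  have e2: "Tact X (a+b) (a+c) (plus_r a g) (eta X (a+b) x) = Tcls X (a+c) (0, ?y2)"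
    unfolding eta_def using Tact_cls[OF F pg x0] by simp
  have gl: "\<And>j. j < b \<Longrightarrow> g j < c" using g by (rule injmD)
  have "Tcls X (a+c) (b, ?y1) = Tcls X (a+c) (0, ?y2) \<longleftrightarrow>
    (\<exists>d u v. injm b d u \<and> injm 0 d v \<and>
      snd X (a+c+b) (a+c+d) (plus_r (a+c) u) ?y1 = snd X (a+c+0) (a+c+d) (plus_r (a+c) v) ?y2)"
    by (rule Tcls_eq_J[OF F y1 y2])
  also have "\<dots> \<longleftrightarrow> (\<exists>d u. injm b d u \<and> snd X (a+b) (a+c+d) (plus_r a (\<lambda>j. c + u j)) x = snd X (a+b) (a+c+d) (plus_r a g) x)"
  proof -
    have A: "snd X (a+c+b) (a+c+d) (plus_r (a+c) u) ?y1 = snd X (a+b) (a+c+d) (plus_r a (\<lambda>j. c + u j)) x"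
      if u: "injm b d u" for d u
      by (rule F_comp[OF F injm_plus_l[OF pf] injm_plus_r[OF u] x]) (auto simp: plus_r_def plus_l_def)
    have B: "snd X (a+c+0) (a+c+d) (plus_r (a+c) v) ?y2 = snd X (a+b) (a+c+d) (plus_r a g) x" for d v
    proof -
      have v: "injm (a+c) (a+c+d) (plus_r (a+c) v)" by (rule injmI) (auto simp: plus_r_def)
      have pl: "injm (a+b) (a+c) (plus_l (a+b) (a+c) (plus_r a g))" using injm_plus_l[OF pg, of 0] by simp
      show ?thesis using F_comp[OF F pl v x, of "plus_r a g"]
        by (auto simp: plus_r_def plus_l_def gl)
    qed
    show ?thesis using A B injm_0 by metis
  qed
  finally show ?thesis using e1 e2 by simp
qed

lemma eq_char_s:
  assumes F: "is_inj_functor X" and x: "x \<in> fst X (a+b)"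
  shows "Tcls X a (b,x) \<in> equalizing X a \<longleftrightarrow>
    (\<exists>c d g u. injm b c g \<and> injm b d u \<and> snd X (a+b) (a+c+d) (plus_r a (\<lambda>j. c + u j)) x = snd X (a+b) (a+c+d) (plus_r a g) x)"
proof -
  have FT: "is_inj_functor (T X)" by (rule T_functor[OF F])
  let ?\<xi> = "Tcls X a (b,x)"
  have xi: "?\<xi> \<in> Tobj X a" by (rule Tobj_cls[OF x])
  have v1: "?\<xi> \<in> fst (T X) (a+0)" using xi unfolding T_def by simp
  have v2: "eta X (a+b) x \<in> fst (T X) (a+b)" unfolding T_def using eta_mem[OF x] by simp
  have "eta (T X) a ?\<xi> = Tcls (T X) a (0, ?\<xi>)" unfolding eta_def ..
  moreover have "Tmap (T X) (eta X) a ?\<xi> = Tcls (T X) a (b, eta X (a+b) x)"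
    by (rule Tmap_cls[OF F FT eta_natural[OF F] x])
  ultimately have "?\<xi> \<in> equalizing X a \<longleftrightarrow> Tcls (T X) a (0, ?\<xi>) = Tcls (T X) a (b, eta X (a+b) x)"
    unfolding equalizing_def using xi by simp
  also have "\<dots> \<longleftrightarrow> (\<exists>c f g. injm 0 c f \<and> injm b c g \<and>
     snd (T X) (a+0) (a+c) (plus_r a f) ?\<xi> = snd (T X) (a+b) (a+c) (plus_r a g) (eta X (a+b) x))"
    by (rule Tcls_eq_J[OF FT v1 v2])
  also have "\<dots> \<longleftrightarrow> (\<exists>c f g. injm b c g \<and>
     Tact X a (a+c) (plus_r a f) ?\<xi> = Tact X (a+b) (a+c) (plus_r a g) (eta X (a+b) x))"
    unfolding T_def using injm_0 by simp
  also have "\<dots> \<longleftrightarrow> (\<exists>c g. injm b c g \<and> (\<exists>d u. injm b d u \<and>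
      snd X (a+b) (a+c+d) (plus_r a (\<lambda>j. c + u j)) x = snd X (a+b) (a+c+d) (plus_r a g) x))"
    using eq_key[OF F x] by blast
  finally show ?thesis by blast
qed

lemma EQs_EQg:
  assumes F: "is_inj_functor X" and x: "x \<in> fst X (a+b)"
  shows "(\<exists>c d g u. injm b c g \<and> injm b d u \<and> snd X (a+b) (a+c+d) (plus_r a (\<lambda>j. c + u j)) x = snd X (a+b) (a+c+d) (plus_r a g) x)
     \<longleftrightarrow> EQg X a b x"
proof
  assume "\<exists>c d g u. injm b c g \<and> injm b d u \<and> snd X (a+b) (a+c+d) (plus_r a (\<lambda>j. c + u j)) x = snd X (a+b) (a+c+d) (plus_r a g) x"
  then obtain c d g u where g: "injm b c g" and u: "injm b d u"
    and e: "snd X (a+b) (a+c+d) (plus_r a (\<lambda>j. c + u j)) x = snd X (a+b) (a+c+d) (plus_r a g) x" by blast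
  have g': "injm b (c+d) g" using injm_mono[OF g] by simp
  have u': "injm b (c+d) (\<lambda>j. c + u j)" using injm_shift[OF u] .
  have dis: "\<forall>i<b. \<forall>j<b. g i \<noteq> c + u j" using injmD(1)[OF g] by fastforce
  have "snd X (a+b) (a+(c+d)) (plus_r a (\<lambda>j. c + u j)) x = snd X (a+b) (a+(c+d)) (plus_r a g) x"
    using e by (simp add: add.assoc)
  then show "EQg X a b x" unfolding EQg_def using g' u' dis by blast
next
  assume "EQg X a b x"
  then obtain C g u where g: "injm b C g" and u: "injm b C u" and dis: "\<forall>i<b. \<forall>j<b. g i \<noteq> u j"
    and e: "snd X (a+b) (a+C) (plus_r a u) x = snd X (a+b) (a+C) (plus_r a g) x"
    unfolding EQg_def by blast
  define \<rho> where "\<rho> = (\<lambda>i. if i \<in> u ` {..<b} then C + i else i)"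
  have \<rho>: "injm C (C+C) \<rho>"
  proof (rule injmI)
    fix i assume "i < C" then show "\<rho> i < C + C" unfolding \<rho>_def by auto
  next
    fix i j assume ij: "i < C" "j < C" "\<rho> i = \<rho> j"
    then show "i = j" unfolding \<rho>_def by (auto split: if_splits)
  qed
  have pr: "injm (a+C) (a+(C+C)) (plus_r a \<rho>)" by (rule injm_plus_r[OF \<rho>])
  have "snd X (a+b) (a+(C+C)) (plus_r a (\<lambda>j. C + u j)) x = snd X (a+C) (a+(C+C)) (plus_r a \<rho>) (snd X (a+b) (a+C) (plus_r a u) x)"
    by (rule sym, rule F_comp[OF F injm_plus_r[OF u] pr x]) (auto simp: plus_r_def \<rho>_def)
  also have "\<dots> = snd X (a+C) (a+(C+C)) (plus_r a \<rho>) (snd X (a+b) (a+C) (plus_r a g) x)" by (simp add: e)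
  also have "\<dots> = snd X (a+b) (a+(C+C)) (plus_r a g) x"
  proof (rule F_comp[OF F injm_plus_r[OF g] pr x])
    fix k assume k: "k < a + b"
    show "plus_r a \<rho> (plus_r a g k) = plus_r a g k"
    proof (cases "k < a")
      case False
      then have "g (k - a) \<notin> u ` {..<b}" using dis k by auto
      then show ?thesis using False unfolding plus_r_def \<rho>_def by auto
    qed (simp add: plus_r_def)
  qed
  finally have "snd X (a+b) (a+C+C) (plus_r a (\<lambda>j. C + u j)) x = snd X (a+b) (a+C+C) (plus_r a g) x"
    by (simp add: add.assoc)
  then show "\<exists>c d g u. injm b c g \<and> injm b d u \<and> snd X (a+b) (a+c+d) (plus_r a (\<lambda>j. c + u j)) x = snd X (a+b) (a+c+d) (plus_r a g) x"
    using g u by blast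
qed

lemma eq_char:
  assumes F: "is_inj_functor X" and x: "x \<in> fst X (a+b)"
  shows "Tcls X a (b,x) \<in> equalizing X a \<longleftrightarrow> EQg X a b x"
  using eq_char_s[OF F x] EQs_EQg[OF F x] by blast

lemma equalizing_sub: "equalizing X a \<subseteq> Tobj X a"
  unfolding equalizing_def by auto



definition INJ :: "'a psh \<Rightarrow> bool" where
  "INJ Y \<longleftrightarrow> (\<forall>n m f x y. injm n m f \<longrightarrow> x \<in> fst Y n \<longrightarrow> y \<in> fst Y n \<longrightarrow> snd Y n m f x = snd Y n m f y \<longrightarrow> x = y)"

definition SP :: "'a psh \<Rightarrow> bool" where
  "SP Y \<longleftrightarrow> (\<forall>a b y. y \<in> fst Y (a+b) \<longrightarrow> EQg Y a b y \<longrightarrow> (\<exists>z\<in>fst Y a. snd Y a (a+b) id z = y))"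

lemma INJD: "INJ Y \<Longrightarrow> injm n m f \<Longrightarrow> x \<in> fst Y n \<Longrightarrow> y \<in> fst Y n \<Longrightarrow> snd Y n m f x = snd Y n m f y \<Longrightarrow> x = y"
  unfolding INJ_def by blast

lemma eta_eq_iff:
  assumes F: "is_inj_functor X" and x: "x \<in> fst X a" and y: "y \<in> fst X a"
  shows "eta X a x = eta X a y \<longleftrightarrow> (\<exists>c. snd X a (a+c) id x = snd X a (a+c) id y)"
proof -
  have x0: "x \<in> fst X (a+0)" and y0: "y \<in> fst X (a+0)" using x y by auto
  have cx: "snd X a (a+c) (plus_r a f) x = snd X a (a+c) id x" for c f
    by (rule F_cong[OF F _ _ x]) (auto simp: plus_r_def intro: injmI)
  have cy: "snd X a (a+c) (plus_r a f) y = snd X a (a+c) id y" for c f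
    by (rule F_cong[OF F _ _ y]) (auto simp: plus_r_def intro: injmI)
  show ?thesis unfolding eta_def Tcls_eq_J[OF F x0 y0] using cx cy injm_0 by simp
qed

lemma sober_imp_INJ:
  assumes F: "is_inj_functor X" and S: "sober X"
  shows "INJ X"
  unfolding INJ_def
proof (intro allI impI)
  fix n m f x y assume f: "injm n m f" and x: "x \<in> fst X n" and y: "y \<in> fst X n"
    and e: "snd X n m f x = snd X n m f y"
  obtain \<rho> where \<rho>: "injm m (n+m) \<rho>" "\<forall>j<n. \<rho> (f j) = j"
  proof -
    have t1: "\<And>i j. i < n \<Longrightarrow> j < n \<Longrightarrow> (\<lambda>i. i) i = (\<lambda>i. i) j \<Longrightarrow> i = j" by simp
    have t2: "\<And>i. i < n \<Longrightarrow> (\<lambda>i. i) i < n" by simp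
    show ?thesis using that transfer_injm[of n f "\<lambda>i. i" m n, OF injmD(2)[OF f] t1 injmD(1)[OF f] t2] by blast
  qed
  have "snd X n (n+m) id x = snd X m (n+m) \<rho> (snd X n m f x)"
    by (rule sym, rule F_comp[OF F f \<rho>(1) x]) (simp add: \<rho>(2))
  also have "\<dots> = snd X m (n+m) \<rho> (snd X n m f y)" by (simp add: e)
  also have "\<dots> = snd X n (n+m) id y"
    by (rule F_comp[OF F f \<rho>(1) y]) (simp add: \<rho>(2))
  finally have "eta X n x = eta X n y" using eta_eq_iff[OF F x y] by blast
  then show "x = y" using S x y unfolding sober_def inj_on_def by blast
qed

lemma sober_imp_SP:
  assumes F: "is_inj_functor X" and S: "sober X"
  shows "SP X"
  unfolding SP_def
proof (intro allI impI)
  fix a b y assume y: "y \<in> fst X (a+b)" and E: "EQg X a b y"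
  have "Tcls X a (b,y) \<in> equalizing X a" using eq_char[OF F y] E by blast
  then obtain z where z: "z \<in> fst X a" and ez: "eta X a z = Tcls X a (b,y)"
    using S unfolding sober_def by (metis imageE)
  have z0: "z \<in> fst X (a+0)" using z by simp
  from ez obtain c f g where f: "injm 0 c f" and g: "injm b c g"
    and e: "snd X (a+0) (a+c) (plus_r a f) z = snd X (a+b) (a+c) (plus_r a g) y"
    unfolding eta_def using Tcls_eq_J[OF F z0 y] by blast
  have zi: "snd X a (a+b) id z \<in> fst X (a+b)" by (rule F_mem[OF F injm_id z]) simp
  have "snd X (a+b) (a+c) (plus_r a g) (snd X a (a+b) id z) = snd X a (a+c) (plus_r a f) z"
    by (rule F_comp[OF F injm_id injm_plus_r[OF g] z]) (auto simp: plus_r_def)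
  also have "\<dots> = snd X (a+b) (a+c) (plus_r a g) y" using e by simp
  finally have "snd X a (a+b) id z = y"
    using INJD[OF sober_imp_INJ[OF F S] injm_plus_r[OF g] zi y] by blast
  then show "\<exists>z\<in>fst X a. snd X a (a+b) id z = y" using z by blast
qed

lemma INJ_SP_imp_sober:
  assumes F: "is_inj_functor X" and I: "INJ X" and P: "SP X"
  shows "sober X"
  unfolding sober_def
proof (intro allI conjI)
  fix a
  show "inj_on (eta X a) (fst X a)"
  proof (rule inj_onI)
    fix x y assume x: "x \<in> fst X a" and y: "y \<in> fst X a" and e: "eta X a x = eta X a y"
    then obtain c where "snd X a (a+c) id x = snd X a (a+c) id y" using eta_eq_iff[OF F x y] by blast
    then show "x = y" using INJD[OF I _ x y] injm_id[of a "a+c"] by simp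
  qed
  show "eta X a ` fst X a = equalizing X a"
  proof
    show "eta X a ` fst X a \<subseteq> equalizing X a"
    proof
      fix \<xi> assume "\<xi> \<in> eta X a ` fst X a"
      then obtain x where x: "x \<in> fst X a" and xe: "\<xi> = eta X a x" by blast
      have x0: "x \<in> fst X (a+0)" using x by simp
      have "EQg X a 0 x" unfolding EQg_def
        by (rule exI[of _ 0], rule exI[of _ id], rule exI[of _ id]) (simp add: injm_0)
      then show "\<xi> \<in> equalizing X a" using eq_char[OF F x0] xe unfolding eta_def by simp
    qed
  next
    show "equalizing X a \<subseteq> eta X a ` fst X a"
    proof
      fix \<xi> assume xi: "\<xi> \<in> equalizing X a"
      then have "\<xi> \<in> Tobj X a" using equalizing_sub by blast
      then obtain b x where x: "x \<in> fst X (a+b)" and xe: "\<xi> = Tcls X a (b,x)" using Tobj_some[OF F] by metis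
      have "EQg X a b x" using eq_char[OF F x] xi xe by simp
      then obtain z where z: "z \<in> fst X a" and zx: "snd X a (a+b) id z = x" using P x unfolding SP_def by blast
      have z0: "z \<in> fst X (a+0)" using z by simp
      have "snd X (a+0) (a+b) (plus_r a id) z = snd X (a+b) (a+b) (plus_r a id) x"
      proof -
        have "snd X (a+b) (a+b) (plus_r a id) x = x" by (rule F_idlike[OF F x]) (simp add: plus_r_def)
        moreover have "snd X a (a+b) (plus_r a id) z = snd X a (a+b) id z"
          by (rule F_cong[OF F _ _ z]) (auto simp: plus_r_def intro: injmI)
        ultimately show ?thesis using zx by simp
      qed
      then have "Tcls X a (0,z) = Tcls X a (b,x)"
        using Tcls_eq_J[OF F z0 x] injm_0 injm_id[of b b] by blast
      then show "\<xi> \<in> eta X a ` fst X a" using z xe unfolding eta_def by blast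
    qed
  qed
qed

lemma inj_pullback_self:
  assumes f: "injm n m f"
  shows "inj_pullback n n m f f n id id"
  unfolding inj_pullback_def
proof (intro conjI allI impI)
  fix q u v assume h: "injm q n u \<and> injm q n v \<and> (\<forall>i<q. f (u i) = f (v i))"
  then have uv: "\<forall>i<q. u i = v i" using injmD[OF f] injmD(1)[of q n u] injmD(1)[of q n v] by metis
  show "\<exists>w. injm q n w \<and> (\<forall>i<q. id (w i) = u i \<and> id (w i) = v i) \<and>
           (\<forall>w'. injm q n w' \<and> (\<forall>i<q. id (w' i) = u i \<and> id (w' i) = v i) \<longrightarrow> (\<forall>i<q. w' i = w i))"
    using h uv by (intro exI[of _ u]) auto
qed (use f in \<open>auto intro: injm_id\<close>)

lemma inj_pullback_EQ:
  assumes g: "injm b C g" and u: "injm b C u" and dis: "\<forall>i<b. \<forall>j<b. g i \<noteq> u j"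
  shows "inj_pullback (a+b) (a+b) (a+C) (plus_r a u) (plus_r a g) a id id"
  unfolding inj_pullback_def
proof (intro conjI allI impI)
  fix q U V assume h: "injm q (a+b) U \<and> injm q (a+b) V \<and> (\<forall>i<q. plus_r a u (U i) = plus_r a g (V i))"
  have cl: "U i < a \<and> V i = U i" if i: "i < q" for i
  proof -
    have Ui: "U i < a + b" and Vi: "V i < a + b" using h i injmD(1) by blast+
    have e: "plus_r a u (U i) = plus_r a g (V i)" using h i by blast
    show ?thesis
    proof (cases "U i < a"; cases "V i < a")
      assume "U i < a" "V i < a" then show ?thesis using e by (simp add: plus_r_def)
    next
      assume "U i < a" "\<not> V i < a" then show ?thesis using e by (simp add: plus_r_def)
    next
      assume "\<not> U i < a" "V i < a" then show ?thesis using e by (simp add: plus_r_def)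
    next
      assume a1: "\<not> U i < a" "\<not> V i < a"
      then have "u (U i - a) = g (V i - a)" using e by (simp add: plus_r_def)
      moreover have "U i - a < b" "V i - a < b" using Ui Vi a1 by auto
      ultimately show ?thesis using dis by metis
    qed
  qed
  have Uinj: "injm q a U" using h cl unfolding injm_def inj_on_def by auto
  show "\<exists>w. injm q a w \<and> (\<forall>i<q. id (w i) = U i \<and> id (w i) = V i) \<and>
           (\<forall>w'. injm q a w' \<and> (\<forall>i<q. id (w' i) = U i \<and> id (w' i) = V i) \<longrightarrow> (\<forall>i<q. w' i = w i))"
    using Uinj cl by (intro exI[of _ U]) auto
qed (use injm_plus_r[OF g, of a] injm_plus_r[OF u, of a] in \<open>auto intro: injm_id simp: plus_r_lt\<close>)

lemma nominal_imp_INJ: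
  assumes F: "is_inj_functor X" and N: "nominal X"
  shows "INJ X"
  unfolding INJ_def
proof (intro allI impI)
  fix n m f x y assume f: "injm n m f" and x: "x \<in> fst X n" and y: "y \<in> fst X n"
    and e: "snd X n m f x = snd X n m f y"
  have "set_pullback X n n m f f n id id" using N inj_pullback_self[OF f] unfolding nominal_def by blast
  then obtain z where "z \<in> fst X n" "snd X n n id z = x" "snd X n n id z = y"
    using x y e unfolding set_pullback_def by blast
  then show "x = y" by simp
qed

lemma nominal_imp_SP:
  assumes F: "is_inj_functor X" and N: "nominal X"
  shows "SP X"
  unfolding SP_def
proof (intro allI impI)
  fix a b y assume y: "y \<in> fst X (a+b)" and E: "EQg X a b y"
  then obtain C g u where g: "injm b C g" and u: "injm b C u" and dis: "\<forall>i<b. \<forall>j<b. g i \<noteq> u j"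
    and e: "snd X (a+b) (a+C) (plus_r a u) y = snd X (a+b) (a+C) (plus_r a g) y"
    unfolding EQg_def by blast
  have "set_pullback X (a+b) (a+b) (a+C) (plus_r a u) (plus_r a g) a id id"
    using N inj_pullback_EQ[OF g u dis] unfolding nominal_def by blast
  then obtain z where "z \<in> fst X a" "snd X a (a+b) id z = y"
    using y e unfolding set_pullback_def by blast
  then show "\<exists>z\<in>fst X a. snd X a (a+b) id z = y" by blast
qed



lemma INJ_SP_imp_nominal:
  assumes F: "is_inj_functor Y" and I: "INJ Y" and P: "SP Y"
  shows "nominal Y"
  unfolding nominal_def set_pullback_def
proof (intro allI impI ballI)
  fix n m p f g k h j x y
  assume pb: "inj_pullback n m p f g k h j" and x0: "x \<in> fst Y n" and y: "y \<in> fst Y m"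
    and e0: "snd Y n p f x = snd Y m p g y"
  have f0: "injm n p f" and g: "injm m p g" and h0: "injm k n h" and j: "injm k m j"
    and comm: "\<forall>i<k. f (h i) = g (j i)"
    using pb unfolding inj_pullback_def by blast+
  have inter0: "\<exists>t<k. h t = i" if i: "i < n" and l: "l < m" and fl: "f i = g l" for i l
  proof -
    have "injm 1 n (\<lambda>_. i)" using i by (auto intro: injmI)
    moreover have "injm 1 m (\<lambda>_. l)" using l by (auto intro: injmI)
    ultimately obtain w where "injm 1 k w" "h (w 0) = i"
      using pb fl unfolding inj_pullback_def by (metis less_one)
    then show ?thesis using injmD(1) by blast
  qed
  obtain b where nb: "n = k + b" using injm_le[OF h0] le_Suc_ex by blast
  have f: "injm (k+b) p f" and h: "injm k (k+b) h" and x: "x \<in> fst Y (k+b)"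
    and e: "snd Y (k+b) p f x = snd Y m p g y"
    using f0 h0 x0 e0 nb by auto
  have inter: "\<exists>t<k. h t = i" if "i < k+b" "l < m" "f i = g l" for i l using inter0 that nb by simp
  obtain \<sigma> \<pi> where \<sigma>: "injm (k+b) (k+b) \<sigma>" and \<pi>: "injm (k+b) (k+b) \<pi>" and \<sigma>h: "\<forall>i<k. \<sigma> i = h i"
    and \<sigma>\<pi>: "\<forall>i<k+b. \<sigma> (\<pi> i) = i" and \<pi>\<sigma>: "\<forall>i<k+b. \<pi> (\<sigma> i) = i"
    using perm_extend[OF h] by blast
  define x' where "x' = snd Y (k+b) (k+b) \<pi> x"
  have x': "x' \<in> fst Y (k+b)" unfolding x'_def by (rule F_mem[OF F \<pi> x])
  have sx': "snd Y (k+b) (k+b) \<sigma> x' = x"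
    unfolding x'_def using F_comp[OF F \<pi> \<sigma> x, of "\<lambda>i. i"] F_idlike[OF F x, of "\<lambda>i. i"] \<sigma>\<pi> by simp
  define \<psi> where "\<psi> = (\<lambda>i. if i \<in> g ` {..<m} then i else p + i)"
  have \<psi>: "injm p (p+p) \<psi>"
  proof (rule injmI)
    fix i assume "i < p" then show "\<psi> i < p + p" unfolding \<psi>_def by auto
  next
    fix i i' assume "i < p" "i' < p" "\<psi> i = \<psi> i'" then show "i = i'" unfolding \<psi>_def by (auto split: if_splits)
  qed
  have idp: "injm p (p+p) id" by (rule injm_id) simp
  have fs: "injm (k+b) p (f \<circ> \<sigma>)" by (rule injm_comp[OF \<sigma> f])
  have A: "snd Y (k+b) p (f \<circ> \<sigma>) x' = snd Y (k+b) p f x"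
    using F_comp[OF F \<sigma> f x', of "f \<circ> \<sigma>"] sx' by simp
  have "snd Y (k+b) (p+p) (f \<circ> \<sigma>) x' = snd Y p (p+p) id (snd Y (k+b) p (f \<circ> \<sigma>) x')"
    by (rule sym, rule F_comp[OF F fs idp x']) simp
  also have "\<dots> = snd Y p (p+p) id (snd Y m p g y)" using A e by simp
  also have "\<dots> = snd Y m (p+p) (\<psi> \<circ> g) y"
    by (rule F_comp[OF F g idp y]) (auto simp: \<psi>_def)
  also have "\<dots> = snd Y p (p+p) \<psi> (snd Y m p g y)"
    by (rule sym, rule F_comp[OF F g \<psi> y]) simp
  also have "\<dots> = snd Y p (p+p) \<psi> (snd Y (k+b) p (f \<circ> \<sigma>) x')" using A e by simp
  also have "\<dots> = snd Y (k+b) (p+p) (\<psi> \<circ> f \<circ> \<sigma>) x'"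
    by (rule F_comp[OF F fs \<psi> x']) simp
  finally have E1: "snd Y (k+b) (p+p) (f \<circ> \<sigma>) x' = snd Y (k+b) (p+p) (\<psi> \<circ> f \<circ> \<sigma>) x'" .
  have notg: "f (\<sigma> (k + j')) \<notin> g ` {..<m}" if j': "j' < b" for j'
  proof
    assume "f (\<sigma> (k + j')) \<in> g ` {..<m}"
    then obtain l where "l < m" "f (\<sigma> (k + j')) = g l" by auto
    moreover have "\<sigma> (k + j') < k + b" using injmD(1)[OF \<sigma>] j' by simp
    ultimately obtain t where t: "t < k" "h t = \<sigma> (k + j')" using inter by blast
    then have "\<sigma> t = \<sigma> (k + j')" using \<sigma>h by simp
    then have "t = k + j'" using injmD(2)[OF \<sigma>, of t "k + j'"] t j' by simp
    then show False using t by simp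
  qed
  define \<sigma>' where "\<sigma>' = (\<lambda>i. if i < k + b then f (\<sigma> i) else \<psi> (f (\<sigma> (i - b))))"
  have fsl: "\<And>i. i < k + b \<Longrightarrow> f (\<sigma> i) < p" using injmD(1)[OF fs] by simp
  have s'1: "\<sigma>' i < p + p" if "i < k + b + b" for i
  proof (cases "i < k + b")
    case True then show ?thesis using fsl[of i] unfolding \<sigma>'_def by simp
  next
    case False
    then have "i - b < k + b" using that by simp
    then show ?thesis using fsl[of "i - b"] injmD(1)[OF \<psi>] unfolding \<sigma>'_def using False by simp
  qed
  have s'2: "i = i'" if ii: "i < k + b + b" "i' < k + b + b" and ee: "\<sigma>' i = \<sigma>' i'" for i i'
  proof -
    have big2: "\<sigma>' i = p + f (\<sigma> (i - b))" if "\<not> i < k + b" "i < k + b + b" for i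
    proof -
      define j' where "j' = i - b - k"
      have "i - b = k + j'" "j' < b" using that unfolding j'_def by auto
      then show ?thesis using notg[of j'] that unfolding \<sigma>'_def \<psi>_def by simp
    qed
    show ?thesis
    proof (cases "i < k + b"; cases "i' < k + b")
      assume a1: "i < k + b" "i' < k + b"
      then have "f (\<sigma> i) = f (\<sigma> i')" using ee unfolding \<sigma>'_def by simp
      then show ?thesis using injmD(2)[OF fs, of i i'] a1 by simp
    next
      assume a1: "i < k + b" "\<not> i' < k + b"
      then show ?thesis using ee big2[of i'] ii fsl[of i] unfolding \<sigma>'_def by simp
    next
      assume a1: "\<not> i < k + b" "i' < k + b"
      then show ?thesis using ee big2[of i] ii fsl[of i'] unfolding \<sigma>'_def by simp
    next
      assume a1: "\<not> i < k + b" "\<not> i' < k + b"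
      then have "f (\<sigma> (i - b)) = f (\<sigma> (i' - b))" using ee big2[of i] big2[of i'] ii by simp
      then have "i - b = i' - b" using injmD(2)[OF fs, of "i - b" "i' - b"] a1 ii by simp
      then show ?thesis using a1 by simp
    qed
  qed
  obtain \<rho> where \<rho>0: "injm (p+p) (k+b+b+(p+p)) \<rho>" and \<rho>s: "\<forall>i<k+b+b. \<rho> (\<sigma>' i) = i"
  proof -
    have t1: "\<And>i j. i < k+b+b \<Longrightarrow> j < k+b+b \<Longrightarrow> (\<lambda>i. i) i = (\<lambda>i. i) j \<Longrightarrow> i = j" by simp
    have t2: "\<And>i. i < k+b+b \<Longrightarrow> (\<lambda>i. i) i < k+b+b" by simp
    show ?thesis using that transfer_injm[of "k+b+b" \<sigma>' "\<lambda>i. i" "p+p" "k+b+b", OF s'2 t1 s'1 t2] by blast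
  qed
  define C where "C = b + b + (p + p)"
  have psf: "injm (k+b) (p+p) (\<psi> \<circ> f \<circ> \<sigma>)" using injm_comp[OF fs \<psi>] by (simp add: comp_assoc)
  have \<rho>: "injm (p+p) (k+C) \<rho>" using \<rho>0 unfolding C_def by (simp add: add.assoc)
  have "snd Y (k+b) (k+C) (plus_r k (\<lambda>j. j)) x' = snd Y (p+p) (k+C) \<rho> (snd Y (k+b) (p+p) (f \<circ> \<sigma>) x')"
  proof (rule sym, rule F_comp[OF F injm_mono[OF fs] \<rho> x'])
    fix i assume i: "i < k + b"
    then have "(f \<circ> \<sigma>) i = \<sigma>' i" unfolding \<sigma>'_def by simp
    then show "\<rho> ((f \<circ> \<sigma>) i) = plus_r k (\<lambda>j. j) i" using \<rho>s i by (simp add: plus_r_def)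
  qed simp
  also have "\<dots> = snd Y (p+p) (k+C) \<rho> (snd Y (k+b) (p+p) (\<psi> \<circ> f \<circ> \<sigma>) x')" using E1 by simp
  also have "\<dots> = snd Y (k+b) (k+C) (plus_r k (\<lambda>j. b + j)) x'"
  proof (rule F_comp[OF F psf \<rho> x'])
    fix i assume i: "i < k + b"
    show "\<rho> ((\<psi> \<circ> f \<circ> \<sigma>) i) = plus_r k (\<lambda>j. b + j) i"
    proof (cases "i < k")
      case True
      then have "f (\<sigma> i) = g (j i)" using \<sigma>h comm by simp
      then have "\<psi> (f (\<sigma> i)) = f (\<sigma> i)" using injmD(1)[OF j True] unfolding \<psi>_def by auto
      then have "(\<psi> \<circ> f \<circ> \<sigma>) i = \<sigma>' i" using i unfolding \<sigma>'_def by simp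
      then show ?thesis using \<rho>s i True by (simp add: plus_r_def)
    next
      case False
      then have "(\<psi> \<circ> f \<circ> \<sigma>) i = \<sigma>' (i + b)" unfolding \<sigma>'_def by simp
      then show ?thesis using \<rho>s[rule_format, of "i + b"] i False by (simp add: plus_r_def)
    qed
  qed
  finally have E2: "snd Y (k+b) (k+C) (plus_r k (\<lambda>j. j)) x' = snd Y (k+b) (k+C) (plus_r k (\<lambda>j. b + j)) x'" .
  have "EQg Y k b x'" unfolding EQg_def
  proof (intro exI conjI)
    show "injm b C (\<lambda>j. b + j)" unfolding C_def by (rule injmI) auto
    show "injm b C (\<lambda>j. j)" unfolding C_def by (rule injmI) auto
    show "\<forall>i<b. \<forall>j<b. b + i \<noteq> j" by auto
    show "snd Y (k+b) (k+C) (plus_r k (\<lambda>j. j)) x' = snd Y (k+b) (k+C) (plus_r k (\<lambda>j. b + j)) x'" by (rule E2)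
  qed
  then obtain z where z: "z \<in> fst Y k" and zx: "snd Y k (k+b) id z = x'" using P x' unfolding SP_def by blast
  have hz: "snd Y k (k+b) h z = x"
  proof -
    have "snd Y k (k+b) h z = snd Y (k+b) (k+b) \<sigma> (snd Y k (k+b) id z)"
      by (rule sym, rule F_comp[OF F injm_id \<sigma> z]) (auto simp: \<sigma>h)
    then show ?thesis using zx sx' by simp
  qed
  have jz: "snd Y k m j z = y"
  proof -
    have jzm: "snd Y k m j z \<in> fst Y m" by (rule F_mem[OF F j z])
    have "snd Y m p g (snd Y k m j z) = snd Y k p (f \<circ> h) z"
      by (rule F_comp[OF F j g z]) (simp add: comm)
    also have "\<dots> = snd Y (k+b) p f (snd Y k (k+b) h z)"
      by (rule sym, rule F_comp[OF F h f z]) simp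
    also have "\<dots> = snd Y m p g y" using hz e by simp
    finally show ?thesis using INJD[OF I g jzm y] by blast
  qed
  show "\<exists>!z. z \<in> fst Y k \<and> snd Y k n h z = x \<and> snd Y k m j z = y"
    unfolding nb
  proof (rule ex1I[of _ z])
    show "z \<in> fst Y k \<and> snd Y k (k+b) h z = x \<and> snd Y k m j z = y" using z hz jz by blast
  next
    fix z' assume "z' \<in> fst Y k \<and> snd Y k (k+b) h z' = x \<and> snd Y k m j z' = y"
    then show "z' = z" using INJD[OF I h _ z] hz by metis
  qed
qed



lemma D_fst: "fst (D X) = equalizing X" and D_snd: "snd (D X) = Tact X"
  unfolding D_def by auto

lemma act_plus_l_plus_r:
  assumes F: "is_inj_functor X" and f: "injm n m f" and u: "injm b C u" and x: "x \<in> fst X (n+b)"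
  shows "snd X (m+b) (m+C) (plus_r m u) (snd X (n+b) (m+b) (plus_l n m f) x) =
         snd X (n+C) (m+C) (plus_l n m f) (snd X (n+b) (n+C) (plus_r n u) x)"
proof -
  have fl: "\<And>k. k < n \<Longrightarrow> f k < m" using f by (rule injmD)
  have "snd X (m+b) (m+C) (plus_r m u) (snd X (n+b) (m+b) (plus_l n m f) x) =
     snd X (n+b) (m+C) (\<lambda>k. if k < n then f k else m + u (k - n)) x"
    by (rule F_comp[OF F injm_plus_l[OF f] injm_plus_r[OF u] x]) (auto simp: plus_l_def plus_r_def fl)
  also have "\<dots> = snd X (n+C) (m+C) (plus_l n m f) (snd X (n+b) (n+C) (plus_r n u) x)"
    by (rule sym, rule F_comp[OF F injm_plus_r[OF u] injm_plus_l[OF f] x]) (auto simp: plus_l_def plus_r_def)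
  finally show ?thesis .
qed

lemma equalizing_closed:
  assumes F: "is_inj_functor X" and f: "injm n m f" and xi: "\<xi> \<in> equalizing X n"
  shows "Tact X n m f \<xi> \<in> equalizing X m"
proof -
  obtain b x where x: "x \<in> fst X (n+b)" and xe: "\<xi> = Tcls X n (b,x)"
    using Tobj_some[OF F] xi equalizing_sub by blast
  have "EQg X n b x" using eq_char[OF F x] xi xe by simp
  then obtain C g u where g: "injm b C g" and u: "injm b C u" and dis: "\<forall>i<b. \<forall>j<b. g i \<noteq> u j"
    and e: "snd X (n+b) (n+C) (plus_r n u) x = snd X (n+b) (n+C) (plus_r n g) x"
    unfolding EQg_def by blast
  let ?y = "snd X (n+b) (m+b) (plus_l n m f) x"
  have y: "?y \<in> fst X (m+b)" by (rule F_mem[OF F injm_plus_l[OF f] x])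
  have "snd X (m+b) (m+C) (plus_r m u) ?y = snd X (m+b) (m+C) (plus_r m g) ?y"
    using act_plus_l_plus_r[OF F f u x] act_plus_l_plus_r[OF F f g x] e by simp
  then have "EQg X m b ?y" unfolding EQg_def using g u dis by blast
  then show ?thesis unfolding xe Tact_cls[OF F f x] using eq_char[OF F y] by simp
qed

lemma D_functor:
  assumes F: "is_inj_functor X"
  shows "is_inj_functor (D X)"
proof -
  have FT: "is_inj_functor (T X)" by (rule T_functor[OF F])
  have sub: "\<And>n. equalizing X n \<subseteq> Tobj X n" by (rule equalizing_sub)
  show ?thesis
    using FT sub equalizing_closed[OF F] unfolding is_inj_functor_def D_def T_def fst_conv snd_conv
    by (meson subsetD)
qed

lemma transfer_out:
  assumes \<rho>: "injm N P \<rho>" and \<rho>s: "\<forall>j<n. \<rho> (\<sigma> j) = j" and \<sigma>b: "\<forall>j<n. \<sigma> j < N"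
    and i: "i < N" and out: "\<forall>j<n. i \<noteq> \<sigma> j"
  shows "n \<le> \<rho> i"
proof (rule ccontr)
  assume "\<not> n \<le> \<rho> i"
  then have r: "\<rho> i < n" by simp
  then have "\<rho> (\<sigma> (\<rho> i)) = \<rho> i" using \<rho>s by simp
  then have "\<sigma> (\<rho> i) = i" using injmD(2)[OF \<rho>] \<sigma>b r i by blast
  then show False using out r by metis
qed

lemma Tact_inj:
  assumes F: "is_inj_functor X" and f: "injm n m f" and x1: "\<xi>1 \<in> Tobj X n" and x2: "\<xi>2 \<in> Tobj X n"
    and e: "Tact X n m f \<xi>1 = Tact X n m f \<xi>2"
  shows "\<xi>1 = \<xi>2"
proof -
  obtain b1 y1 where y1: "y1 \<in> fst X (n+b1)" and e1: "\<xi>1 = Tcls X n (b1,y1)" using Tobj_some[OF F x1] by metis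
  obtain b2 y2 where y2: "y2 \<in> fst X (n+b2)" and e2: "\<xi>2 = Tcls X n (b2,y2)" using Tobj_some[OF F x2] by metis
  have m1: "snd X (n+b1) (m+b1) (plus_l n m f) y1 \<in> fst X (m+b1)" by (rule F_mem[OF F injm_plus_l[OF f] y1])
  have m2: "snd X (n+b2) (m+b2) (plus_l n m f) y2 \<in> fst X (m+b2)" by (rule F_mem[OF F injm_plus_l[OF f] y2])
  from e have "Tcls X m (b1, snd X (n+b1) (m+b1) (plus_l n m f) y1) = Tcls X m (b2, snd X (n+b2) (m+b2) (plus_l n m f) y2)"
    unfolding e1 e2 Tact_cls[OF F f y1] Tact_cls[OF F f y2] .
  then obtain c u v where u: "injm b1 c u" and v: "injm b2 c v"
    and e3: "snd X (m+b1) (m+c) (plus_r m u) (snd X (n+b1) (m+b1) (plus_l n m f) y1) =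
       snd X (m+b2) (m+c) (plus_r m v) (snd X (n+b2) (m+b2) (plus_l n m f) y2)"
    using Tcls_eq_J[OF F m1 m2] by blast
  define \<sigma> where "\<sigma> = (\<lambda>k. if k < n then f k else m + (k - n))"
  have fl: "\<And>k. k < n \<Longrightarrow> f k < m" using f by (rule injmD)
  have s1: "i = j" if "i < n + c" "j < n + c" "\<sigma> i = \<sigma> j" for i j
    using that injmD(2)[OF f, of i j] fl[of i] fl[of j] unfolding \<sigma>_def by (auto split: if_splits)
  have s2: "\<sigma> i < m + c" if "i < n + c" for i using that fl[of i] unfolding \<sigma>_def by auto
  obtain \<rho> where \<rho>: "injm (m+c) (n+c+(m+c)) \<rho>" and \<rho>s: "\<forall>j<n+c. \<rho> (\<sigma> j) = j"
  proof -
    have t1: "\<And>i j. i < n+c \<Longrightarrow> j < n+c \<Longrightarrow> (\<lambda>i. i) i = (\<lambda>i. i) j \<Longrightarrow> i = j" by simp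
    have t2: "\<And>i. i < n+c \<Longrightarrow> (\<lambda>i. i) i < n+c" by simp
    show ?thesis using that transfer_injm[of "n+c" \<sigma> "\<lambda>i. i" "m+c" "n+c", OF s1 t1 s2 t2] by blast
  qed
  have key: "snd X (m+c) (n+c+(m+c)) \<rho> (snd X (m+b) (m+c) (plus_r m w) (snd X (n+b) (m+b) (plus_l n m f) y)) =
      snd X (n+b) (n+(c+(m+c))) (plus_r n w) y"
    if w: "injm b c w" and y: "y \<in> fst X (n+b)" for b w y
  proof -
    have wl: "\<And>j. j < b \<Longrightarrow> w j < c" using w by (rule injmD)
    have "snd X (m+b) (m+c) (plus_r m w) (snd X (n+b) (m+b) (plus_l n m f) y) =
       snd X (n+b) (m+c) (\<lambda>k. if k < n then f k else m + w (k - n)) y"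
      by (rule F_comp[OF F injm_plus_l[OF f] injm_plus_r[OF w] y]) (auto simp: plus_l_def plus_r_def fl)
    moreover have "injm (n+b) (m+c) (\<lambda>k. if k < n then f k else m + w (k - n))"
      using injm_comp[OF injm_plus_l[OF f] injm_plus_r[OF w]]
      by (rule injm_cong) (auto simp: plus_l_def plus_r_def fl)
    moreover have "snd X (m+c) (n+c+(m+c)) \<rho> (snd X (n+b) (m+c) (\<lambda>k. if k < n then f k else m + w (k - n)) y)
       = snd X (n+b) (n+c+(m+c)) (plus_r n w) y"
    proof (rule F_comp[OF F calculation(2) \<rho> y])
      fix k assume k: "k < n + b"
      show "\<rho> (if k < n then f k else m + w (k - n)) = plus_r n w k"
      proof (cases "k < n")
        case True then show ?thesis using \<rho>s[rule_format, of k] unfolding \<sigma>_def by (simp add: plus_r_def)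
      next
        case False
        then have "w (k - n) < c" using wl k by simp
        then show ?thesis using \<rho>s[rule_format, of "n + w (k - n)"] False unfolding \<sigma>_def by (simp add: plus_r_def)
      qed
    qed
    ultimately show ?thesis by (simp add: add.assoc)
  qed
  have "snd X (n+b1) (n+(c+(m+c))) (plus_r n u) y1 = snd X (n+b2) (n+(c+(m+c))) (plus_r n v) y2"
    using key[OF u y1] key[OF v y2] e3 by simp
  moreover have "injm b1 (c+(m+c)) u" "injm b2 (c+(m+c)) v" using injm_mono[OF u] injm_mono[OF v] by auto
  ultimately have "Tcls X n (b1,y1) = Tcls X n (b2,y2)" using Tcls_eq_J[OF F y1 y2] by blast
  then show ?thesis using e1 e2 by simp
qed

lemma D_INJ:
  assumes F: "is_inj_functor X"
  shows "INJ (D X)"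
  unfolding INJ_def D_fst D_snd using Tact_inj[OF F] equalizing_sub by blast



lemma D_SP:
  assumes F: "is_inj_functor X"
  shows "SP (D X)"
  unfolding SP_def D_fst D_snd
proof (intro allI impI)
  fix a b \<xi> assume xi: "\<xi> \<in> equalizing X (a+b)" and E: "EQg (D X) a b \<xi>"
  from E obtain C g u where g: "injm b C g" and u: "injm b C u" and dis: "\<forall>i<b. \<forall>j<b. g i \<noteq> u j"
    and eqD: "Tact X (a+b) (a+C) (plus_r a u) \<xi> = Tact X (a+b) (a+C) (plus_r a g) \<xi>"
    unfolding EQg_def D_snd by blast
  obtain e x where x: "x \<in> fst X (a+b+e)" and xe: "\<xi> = Tcls X (a+b) (e,x)"
    using Tobj_some[OF F] xi equalizing_sub by blast
  have "EQg X (a+b) e x" using eq_char[OF F x] xi xe by simp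
  then obtain C1 g1 u1 where g1: "injm e C1 g1" and u1: "injm e C1 u1" and dis1: "\<forall>i<e. \<forall>j<e. g1 i \<noteq> u1 j"
    and eq1: "snd X (a+b+e) (a+b+C1) (plus_r (a+b) u1) x = snd X (a+b+e) (a+b+C1) (plus_r (a+b) g1) x"
    unfolding EQg_def by blast
  have pu: "injm (a+b) (a+C) (plus_r a u)" by (rule injm_plus_r[OF u])
  have pg: "injm (a+b) (a+C) (plus_r a g)" by (rule injm_plus_r[OF g])
  have ul: "\<And>j. j < b \<Longrightarrow> u j < C" using u by (rule injmD)
  have gl: "\<And>j. j < b \<Longrightarrow> g j < C" using g by (rule injmD)
  have mu: "snd X (a+b+e) (a+C+e) (plus_l (a+b) (a+C) (plus_r a u)) x \<in> fst X (a+C+e)"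
    by (rule F_mem[OF F injm_plus_l[OF pu] x])
  have mg: "snd X (a+b+e) (a+C+e) (plus_l (a+b) (a+C) (plus_r a g)) x \<in> fst X (a+C+e)"
    by (rule F_mem[OF F injm_plus_l[OF pg] x])
  from eqD have "Tcls X (a+C) (e, snd X (a+b+e) (a+C+e) (plus_l (a+b) (a+C) (plus_r a u)) x) =
      Tcls X (a+C) (e, snd X (a+b+e) (a+C+e) (plus_l (a+b) (a+C) (plus_r a g)) x)"
    unfolding xe Tact_cls[OF F pu x] Tact_cls[OF F pg x] .
  then obtain K v1 v2 where v1: "injm e K v1" and v2: "injm e K v2"
    and eqK: "snd X (a+C+e) (a+C+K) (plus_r (a+C) v1) (snd X (a+b+e) (a+C+e) (plus_l (a+b) (a+C) (plus_r a u)) x) =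
      snd X (a+C+e) (a+C+K) (plus_r (a+C) v2) (snd X (a+b+e) (a+C+e) (plus_l (a+b) (a+C) (plus_r a g)) x)"
    using Tcls_eq_J[OF F mu mg] by blast
  have v1l: "\<And>j. j < e \<Longrightarrow> v1 j < K" using v1 by (rule injmD)
  have v2l: "\<And>j. j < e \<Longrightarrow> v2 j < K" using v2 by (rule injmD)
  define L where "L = (\<lambda>k. if k < a then k else if k < a + b then a + u (k - a) else a + C + v1 (k - a - b))"
  define R where "R = (\<lambda>k. if k < a then k else if k < a + b then a + g (k - a) else a + C + v2 (k - a - b))"
  have Lp: "plus_r (a+C) v1 (plus_l (a+b) (a+C) (plus_r a u) k) = L k" if "k < a+b+e" for k
    using ul[of "k - a"] that unfolding L_def plus_r_def plus_l_def by (auto simp: add.commute)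
  have Rp: "plus_r (a+C) v2 (plus_l (a+b) (a+C) (plus_r a g) k) = R k" if "k < a+b+e" for k
    using gl[of "k - a"] that unfolding R_def plus_r_def plus_l_def by (auto simp: add.commute)
  have Lm: "injm (a+b+e) (a+C+K) L"
    using injm_comp[OF injm_plus_l[OF pu] injm_plus_r[OF v1]] by (rule injm_cong) (simp add: Lp)
  have Rm: "injm (a+b+e) (a+C+K) R"
    using injm_comp[OF injm_plus_l[OF pg] injm_plus_r[OF v2]] by (rule injm_cong) (simp add: Rp)
  have EqLR: "snd X (a+b+e) (a+C+K) L x = snd X (a+b+e) (a+C+K) R x"
  proof -
    have "snd X (a+b+e) (a+C+K) L x = snd X (a+C+e) (a+C+K) (plus_r (a+C) v1) (snd X (a+b+e) (a+C+e) (plus_l (a+b) (a+C) (plus_r a u)) x)"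
      by (rule sym, rule F_comp[OF F injm_plus_l[OF pu] injm_plus_r[OF v1] x]) (simp add: Lp)
    also have "\<dots> = snd X (a+C+e) (a+C+K) (plus_r (a+C) v2) (snd X (a+b+e) (a+C+e) (plus_l (a+b) (a+C) (plus_r a g)) x)"
      by (rule eqK)
    also have "\<dots> = snd X (a+b+e) (a+C+K) R x"
      by (rule F_comp[OF F injm_plus_l[OF pg] injm_plus_r[OF v2] x]) (simp add: Rp)
    finally show ?thesis .
  qed
  have xx: "x \<in> fst X (a+(b+e))" using x by (simp add: add.assoc)
  define \<zeta> where "\<zeta> = Tcls X a (b+e, x)"
  \<comment> \<open>Part (i): the image of zeta is xi\<close>
  define \<sigma>0 where "\<sigma>0 = (\<lambda>k. if k < a then k else a + u (k - a))"
  have s0i: "i = j" if "i < a+b" "j < a+b" "\<sigma>0 i = \<sigma>0 j" for i j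
  proof -
    have "plus_r a u i = plus_r a u j" using that unfolding \<sigma>0_def plus_r_def by simp
    then show ?thesis using injmD(2)[OF pu] that by blast
  qed
  have s0b: "\<sigma>0 i < a+C+K" if i: "i < a+b" for i
  proof (cases "i < a")
    case False
    then have "i - a < b" using i by simp
    then show ?thesis using ul[of "i - a"] False unfolding \<sigma>0_def by simp
  qed (simp add: \<sigma>0_def)
  obtain \<rho> where \<rho>: "injm (a+C+K) (a+b+(a+C+K)) \<rho>" and \<rho>s: "\<forall>j<a+b. \<rho> (\<sigma>0 j) = j"
  proof -
    have t1: "\<And>i j. i < a+b \<Longrightarrow> j < a+b \<Longrightarrow> (\<lambda>i. i) i = (\<lambda>i. i) j \<Longrightarrow> i = j" by simp
    have t2: "\<And>i. i < a+b \<Longrightarrow> (\<lambda>i. i) i < a+b" by simp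
    show ?thesis using that transfer_injm[of "a+b" \<sigma>0 "\<lambda>i. i" "a+C+K" "a+b", OF s0i t1 s0b t2] by blast
  qed
  have out: "a + b \<le> \<rho> i" if "i < a+C+K" "\<forall>j<a+b. i \<noteq> \<sigma>0 j" for i
    using transfer_out[OF \<rho> \<rho>s _ that] s0b by blast
  have Rout: "a + b \<le> \<rho> (R (a + j))" if j: "j < b + e" for j
  proof (rule out)
    show "R (a + j) < a+C+K" using injmD(1)[OF Rm, of "a + j"] j by simp
    show "\<forall>k<a+b. R (a + j) \<noteq> \<sigma>0 k"
    proof (intro allI impI)
      fix k assume k: "k < a + b"
      have kk: "k < a \<or> k - a < b" using k by linarith
      show "R (a + j) \<noteq> \<sigma>0 k"
      proof (cases "j < b")
        case True
        then show ?thesis using dis[rule_format, of j "k - a"] k unfolding R_def \<sigma>0_def by auto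
      next
        case False
        then show ?thesis using ul[of "k - a"] kk unfolding R_def \<sigma>0_def by auto
      qed
    qed
  qed
  have Lout: "a + b \<le> \<rho> (L (a + b + j))" if j: "j < e" for j
  proof (rule out)
    show "L (a + b + j) < a+C+K" using injmD(1)[OF Lm, of "a + b + j"] j by simp
    show "\<forall>k<a+b. L (a + b + j) \<noteq> \<sigma>0 k"
    proof (intro allI impI)
      fix k assume k: "k < a + b"
      have kk: "k < a \<or> k - a < b" using k by linarith
      then show "L (a + b + j) \<noteq> \<sigma>0 k" using ul[of "k - a"] unfolding L_def \<sigma>0_def by auto
    qed
  qed
  define f' where "f' = (\<lambda>j. \<rho> (R (a + j)) - (a + b))"
  define g' where "g' = (\<lambda>j. \<rho> (L (a + b + j)) - (a + b))"
  have f'm: "injm (b+e) (a+C+K) f'"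
  proof (rule injmI)
    fix i assume i: "i < b + e"
    have "R (a + i) < a+C+K" using injmD(1)[OF Rm, of "a + i"] i by simp
    then show "f' i < a+C+K" using injmD(1)[OF \<rho>] unfolding f'_def by fastforce
  next
    fix i i' assume i: "i < b + e" "i' < b + e" and ee: "f' i = f' i'"
    then have "\<rho> (R (a + i)) = \<rho> (R (a + i'))" using Rout[of i] Rout[of i'] unfolding f'_def by simp
    then have "R (a + i) = R (a + i')" using injmD(2)[OF \<rho>] injmD(1)[OF Rm, of "a + i"] injmD(1)[OF Rm, of "a + i'"] i by simp
    then show "i = i'" using injmD(2)[OF Rm, of "a + i" "a + i'"] i by simp
  qed
  have g'm: "injm e (a+C+K) g'"
  proof (rule injmI)
    fix i assume i: "i < e"
    have "L (a + b + i) < a+C+K" using injmD(1)[OF Lm, of "a + b + i"] i by simp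
    then show "g' i < a+C+K" using injmD(1)[OF \<rho>] unfolding g'_def by fastforce
  next
    fix i i' assume i: "i < e" "i' < e" and ee: "g' i = g' i'"
    then have "\<rho> (L (a + b + i)) = \<rho> (L (a + b + i'))" using Lout[of i] Lout[of i'] unfolding g'_def by simp
    then have "L (a + b + i) = L (a + b + i')" using injmD(2)[OF \<rho>] injmD(1)[OF Lm, of "a + b + i"] injmD(1)[OF Lm, of "a + b + i'"] i by simp
    then show "i = i'" using injmD(2)[OF Lm, of "a + b + i" "a + b + i'"] i by simp
  qed
  have pl: "injm (a+(b+e)) (a+b+(b+e)) (plus_l a (a+b) id)" using injm_plus_l[OF injm_id[of a "a+b"]] by simp
  have part1: "Tact X a (a+b) id \<zeta> = \<xi>"
  proof -
    let ?y = "snd X (a+(b+e)) (a+b+(b+e)) (plus_l a (a+b) id) x"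
    have y: "?y \<in> fst X (a+b+(b+e))" by (rule F_mem[OF F pl xx])
    have "snd X (a+b+(b+e)) (a+b+(a+C+K)) (plus_r (a+b) f') ?y = snd X (a+(b+e)) (a+b+(a+C+K)) (\<rho> \<circ> R) x"
    proof (rule F_comp[OF F pl injm_plus_r[OF f'm] xx])
      fix k assume k: "k < a + (b + e)"
      show "plus_r (a+b) f' (plus_l a (a+b) id k) = (\<rho> \<circ> R) k"
      proof (cases "k < a")
        case True
        then show ?thesis using \<rho>s[rule_format, of k] unfolding plus_r_def plus_l_def R_def \<sigma>0_def by simp
      next
        case False
        then have "a + b \<le> \<rho> (R (a + (k - a)))" using Rout[of "k - a"] k by simp
        then show ?thesis using False unfolding plus_r_def plus_l_def f'_def by simp
      qed
    qed
    also have "\<dots> = snd X (a+C+K) (a+b+(a+C+K)) \<rho> (snd X (a+b+e) (a+C+K) R x)"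
      using F_comp[OF F Rm \<rho> x, of "\<rho> \<circ> R"] by (simp add: add.assoc)
    also have "\<dots> = snd X (a+C+K) (a+b+(a+C+K)) \<rho> (snd X (a+b+e) (a+C+K) L x)" by (simp add: EqLR)
    also have "\<dots> = snd X (a+b+e) (a+b+(a+C+K)) (plus_r (a+b) g') x"
    proof (rule F_comp[OF F Lm \<rho> x])
      fix k assume k: "k < a + b + e"
      show "\<rho> (L k) = plus_r (a+b) g' k"
      proof (cases "k < a + b")
        case True
        then have "L k = \<sigma>0 k" unfolding L_def \<sigma>0_def by simp
        then show ?thesis using \<rho>s True by (simp add: plus_r_def)
      next
        case False
        then have "a + b \<le> \<rho> (L (a + b + (k - (a + b))))" using Lout[of "k - (a+b)"] k by simp
        then show ?thesis using False unfolding plus_r_def g'_def by simp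
      qed
    qed
    finally have "Tcls X (a+b) (b+e, ?y) = Tcls X (a+b) (e, x)"
      using Tcls_eq_J[OF F y x] f'm g'm by blast
    then show ?thesis unfolding \<zeta>_def xe Tact_cls[OF F injm_id[of a "a+b"] xx, simplified] by simp
  qed
  \<comment> \<open>Part (ii): zeta is in the equalizer\<close>
  define \<sigma>1 where "\<sigma>1 = (\<lambda>i. if i < a+b+e then plus_r (a+b) g1 i else a + b + u1 (i - (a+b+e)))"
  define \<tau>1 where "\<tau>1 = (\<lambda>i. if i < a+b+e then L i else a + C + K + (i - (a+b+e)))"
  have g1l: "\<And>j. j < e \<Longrightarrow> g1 j < C1" using g1 by (rule injmD)
  have u1l: "\<And>j. j < e \<Longrightarrow> u1 j < C1" using u1 by (rule injmD)
  have pg1: "injm (a+b+e) (a+b+C1) (plus_r (a+b) g1)" by (rule injm_plus_r[OF g1])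
  have s1i: "i = j" if ij: "i < a+b+e+e" "j < a+b+e+e" and ee: "\<sigma>1 i = \<sigma>1 j" for i j
  proof (cases "i < a+b+e"; cases "j < a+b+e")
    assume "i < a+b+e" "j < a+b+e" then show ?thesis using ee injmD(2)[OF pg1] unfolding \<sigma>1_def by auto
  next
    assume a1: "i < a+b+e" "\<not> j < a+b+e"
    moreover have "i - (a+b) < e" "j - (a+b+e) < e" using ij a1 by linarith+
    ultimately show ?thesis using ee dis1[rule_format, of "i - (a+b)" "j - (a+b+e)"] ij unfolding \<sigma>1_def plus_r_def
      by (auto split: if_splits)
  next
    assume a1: "\<not> i < a+b+e" "j < a+b+e"
    moreover have "j - (a+b) < e" "i - (a+b+e) < e" using ij a1 by linarith+
    ultimately show ?thesis using ee dis1[rule_format, of "j - (a+b)" "i - (a+b+e)"] ij unfolding \<sigma>1_def plus_r_def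
      by (auto split: if_splits)
  next
    assume a1: "\<not> i < a+b+e" "\<not> j < a+b+e"
    then have "u1 (i - (a+b+e)) = u1 (j - (a+b+e))" using ee unfolding \<sigma>1_def by simp
    then have "i - (a+b+e) = j - (a+b+e)" using injmD(2)[OF u1] ij a1 by simp
    then show ?thesis using a1 by simp
  qed
  have t1i: "i = j" if ij: "i < a+b+e+e" "j < a+b+e+e" and ee: "\<tau>1 i = \<tau>1 j" for i j
  proof (cases "i < a+b+e"; cases "j < a+b+e")
    assume "i < a+b+e" "j < a+b+e" then show ?thesis using ee injmD(2)[OF Lm] unfolding \<tau>1_def by auto
  next
    assume a1: "i < a+b+e" "\<not> j < a+b+e"
    then show ?thesis using ee injmD(1)[OF Lm, of i] unfolding \<tau>1_def by auto
  next
    assume a1: "\<not> i < a+b+e" "j < a+b+e"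
    then show ?thesis using ee injmD(1)[OF Lm, of j] unfolding \<tau>1_def by auto
  next
    assume a1: "\<not> i < a+b+e" "\<not> j < a+b+e"
    then show ?thesis using ee unfolding \<tau>1_def by simp
  qed
  have s1b: "\<sigma>1 i < a+b+C1" if "i < a+b+e+e" for i
    using that injmD(1)[OF pg1, of i] u1l[of "i - (a+b+e)"] unfolding \<sigma>1_def by auto
  have t1b: "\<tau>1 i < a+C+K+e" if "i < a+b+e+e" for i
    using that injmD(1)[OF Lm, of i] unfolding \<tau>1_def by auto
  obtain \<rho>1 where \<rho>1: "injm (a+b+C1) (a+C+K+e+(a+b+C1)) \<rho>1" and \<rho>1s: "\<forall>j<a+b+e+e. \<rho>1 (\<sigma>1 j) = \<tau>1 j"
    using transfer_injm[of "a+b+e+e" \<sigma>1 \<tau>1 "a+b+C1" "a+C+K+e", OF s1i t1i s1b t1b] by blast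
  define Big where "Big = a+C+K+e+(a+b+C1)"
  define C'' where "C'' = C+K+e+(a+b+C1)"
  have BigC: "a + C'' = Big" unfolding Big_def C''_def by simp
  have \<rho>1': "injm (a+b+C1) Big \<rho>1" using \<rho>1 unfolding Big_def .
  define u'' where "u'' = (\<lambda>j. if j < b then u j else C + K + (j - b))"
  define g'' where "g'' = (\<lambda>j. if j < b then g j else C + v2 (j - b))"
  have "snd X (a+b+e) Big (plus_r a u'') x = snd X (a+b+C1) Big \<rho>1 (snd X (a+b+e) (a+b+C1) (plus_r (a+b) u1) x)"
  proof (rule sym, rule F_comp[OF F injm_plus_r[OF u1] \<rho>1' x])
    fix k assume k: "k < a + b + e"
    show "\<rho>1 (plus_r (a+b) u1 k) = plus_r a u'' k"
    proof (cases "k < a + b")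
      case True
      then have "plus_r (a+b) u1 k = \<sigma>1 k" unfolding \<sigma>1_def plus_r_def using k by simp
      then show ?thesis using \<rho>1s[rule_format, of k] k True unfolding \<tau>1_def L_def u''_def plus_r_def by auto
    next
      case False
      then have "plus_r (a+b) u1 k = \<sigma>1 (a+b+e+(k-(a+b)))" unfolding \<sigma>1_def plus_r_def by simp
      moreover have "a+b+e+(k-(a+b)) < a+b+e+e" using k False by simp
      ultimately show ?thesis using \<rho>1s False unfolding \<tau>1_def u''_def plus_r_def by auto
    qed
  qed
  also have "\<dots> = snd X (a+b+C1) Big \<rho>1 (snd X (a+b+e) (a+b+C1) (plus_r (a+b) g1) x)" by (simp add: eq1)
  also have "\<dots> = snd X (a+b+e) Big L x"
  proof (rule F_comp[OF F pg1 \<rho>1' x])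
    fix k assume k: "k < a + b + e"
    then have "plus_r (a+b) g1 k = \<sigma>1 k" unfolding \<sigma>1_def by simp
    then show "\<rho>1 (plus_r (a+b) g1 k) = L k" using \<rho>1s[rule_format, of k] k unfolding \<tau>1_def by simp
  qed
  also have "\<dots> = snd X (a+C+K) Big id (snd X (a+b+e) (a+C+K) L x)"
    by (rule sym, rule F_comp[OF F Lm injm_id x]) (simp_all add: Big_def)
  also have "\<dots> = snd X (a+C+K) Big id (snd X (a+b+e) (a+C+K) R x)" by (simp add: EqLR)
  also have "\<dots> = snd X (a+b+e) Big (plus_r a g'') x"
  proof (rule F_comp[OF F Rm injm_id x])
    show "a + C + K \<le> Big" unfolding Big_def by simp
  next
    fix k assume k: "k < a + b + e"
    show "id (R k) = plus_r a g'' k" unfolding R_def g''_def plus_r_def by auto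
  qed
  finally have eqz: "snd X (a+(b+e)) (a+C'') (plus_r a u'') x = snd X (a+(b+e)) (a+C'') (plus_r a g'') x"
    unfolding BigC by (simp add: add.assoc)
  have u''m: "injm (b+e) C'' u''"
  proof (rule injmI)
    fix i assume "i < b + e" then show "u'' i < C''" using ul[of i] unfolding u''_def C''_def by auto
  next
    fix i j assume ij: "i < b + e" "j < b + e" "u'' i = u'' j"
    then show "i = j" using injmD(2)[OF u, of i j] ul[of i] ul[of j] unfolding u''_def
      by (auto split: if_splits)
  qed
  have g''m: "injm (b+e) C'' g''"
  proof (rule injmI)
    fix i assume i: "i < b + e"
    show "g'' i < C''"
    proof (cases "i < b")
      case True then show ?thesis using gl[of i] unfolding g''_def C''_def by auto
    next
      case False
      then have "i - b < e" using i by linarith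
      then show ?thesis using v2l[of "i - b"] False unfolding g''_def C''_def by auto
    qed
  next
    fix i j assume ij: "i < b + e" "j < b + e" "g'' i = g'' j"
    show "i = j"
    proof (cases "i < b"; cases "j < b")
      assume "i < b" "j < b" then show ?thesis using ij injmD(2)[OF g, of i j] unfolding g''_def by auto
    next
      assume "i < b" "\<not> j < b" then show ?thesis using ij gl[of i] unfolding g''_def by auto
    next
      assume "\<not> i < b" "j < b" then show ?thesis using ij gl[of j] unfolding g''_def by auto
    next
      assume a1: "\<not> i < b" "\<not> j < b"
      then have "v2 (i - b) = v2 (j - b)" using ij unfolding g''_def by auto
      then have "i - b = j - b" using injmD(2)[OF v2, of "i - b" "j - b"] ij a1 by simp
      then show ?thesis using a1 by simp
    qed
  qed
  have dis'': "\<forall>i<b+e. \<forall>j<b+e. g'' i \<noteq> u'' j"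
  proof (intro allI impI)
    fix i j assume i: "i < b + e" and j: "j < b + e"
    show "g'' i \<noteq> u'' j"
    proof (cases "i < b"; cases "j < b")
      assume "i < b" "j < b" then show ?thesis using dis unfolding g''_def u''_def by auto
    next
      assume "i < b" "\<not> j < b" then show ?thesis using gl[of i] unfolding g''_def u''_def by auto
    next
      assume "\<not> i < b" "j < b" then show ?thesis using ul[of j] unfolding g''_def u''_def by auto
    next
      assume a1: "\<not> i < b" "\<not> j < b"
      then have "i - b < e" using i by linarith
      then show ?thesis using v2l[of "i - b"] a1 unfolding g''_def u''_def by auto
    qed
  qed
  have "EQg X a (b+e) x" unfolding EQg_def using u''m g''m dis'' eqz by blast
  then have "\<zeta> \<in> equalizing X a" unfolding \<zeta>_def using eq_char[OF F xx] by blast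
  then show "\<exists>z\<in>equalizing X a. Tact X a (a+b) id z = \<xi>" using part1 by blast
qed



lemma mD_eta:
  assumes F: "is_inj_functor X" and xi: "\<xi> \<in> equalizing X a"
  shows "mD X a (eta (D X) a \<xi>) = \<xi>"
proof -
  have FD: "is_inj_functor (D X)" by (rule D_functor[OF F])
  have FT: "is_inj_functor (T X)" by (rule T_functor[OF F])
  have N: "natural (D X) (T X) (\<lambda>n \<xi>. \<xi>)"
    unfolding natural_def D_def T_def using equalizing_sub[of X] by auto
  have xi0: "\<xi> \<in> fst (D X) (a+0)" using xi unfolding D_def by simp
  have "Tmap (T X) (\<lambda>n \<xi>. \<xi>) a (Tcls (D X) a (0,\<xi>)) = Tcls (T X) a (0, \<xi>)"
    using Tmap_cls[OF FD FT N xi0] by simp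
  moreover obtain b x where x: "x \<in> fst X (a+b)" and xe: "\<xi> = Tcls X a (b,x)"
    using Tobj_some[OF F] xi equalizing_sub by blast
  moreover have "mu X a (Tcls (T X) a (0, Tcls X (a+0) (b,x))) = Tcls X a (0+b, x)"
    by (rule mu_cls[OF F]) (simp add: x)
  ultimately show ?thesis unfolding mD_def eta_def by simp
qed

theorem corollary9p7:
  fixes X :: "'a psh"
  assumes "is_inj_functor X"
  shows "(sober X \<longleftrightarrow> nominal X) \<and>
         (\<forall>a. bij_betw (mD X a) (fst (D (D X)) a) (fst (D X) a))"
proof (intro conjI allI)
  note F = assms
  show "sober X \<longleftrightarrow> nominal X"
  proof
    assume S: "sober X"
    show "nominal X" by (rule INJ_SP_imp_nominal[OF F sober_imp_INJ[OF F S] sober_imp_SP[OF F S]])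
  next
    assume N: "nominal X"
    show "sober X" by (rule INJ_SP_imp_sober[OF F nominal_imp_INJ[OF F N] nominal_imp_SP[OF F N]])
  qed
  fix a
  have SD: "sober (D X)" by (rule INJ_SP_imp_sober[OF D_functor[OF F] D_INJ[OF F] D_SP[OF F]])
  have inj: "inj_on (eta (D X) a) (equalizing X a)" and im: "eta (D X) a ` equalizing X a = equalizing (D X) a"
    using SD unfolding sober_def D_fst by auto
  show "bij_betw (mD X a) (fst (D (D X)) a) (fst (D X) a)"
    unfolding D_fst bij_betw_def
  proof
    show "inj_on (mD X a) (equalizing (D X) a)"
    proof (rule inj_onI)
      fix z1 z2 assume z1: "z1 \<in> equalizing (D X) a" and z2: "z2 \<in> equalizing (D X) a"
        and e: "mD X a z1 = mD X a z2"
      obtain x1 where x1: "x1 \<in> equalizing X a" "z1 = eta (D X) a x1" using z1 im by blast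
      obtain x2 where x2: "x2 \<in> equalizing X a" "z2 = eta (D X) a x2" using z2 im by blast
      have "x1 = x2" using e x1 x2 mD_eta[OF F] by metis
      then show "z1 = z2" using x1 x2 by simp
    qed
    show "mD X a ` equalizing (D X) a = equalizing X a"
    proof -
      have "mD X a ` equalizing (D X) a = (\<lambda>\<xi>. mD X a (eta (D X) a \<xi>)) ` equalizing X a"
        unfolding im[symmetric] by (simp add: image_image)
      also have "\<dots> = equalizing X a" using mD_eta[OF F] by simp
      finally show ?thesis .
    qed
  qed
qed

end
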